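(* Under the GoRank setting described in the context, for every node $k\in[n]$ and every $t\ge1$, $$\mathbb{E}\big[|R_k(t)-r_k|^2\big]\le \frac{3}{c\,t}\,\sigma_k^2,\qquad\text{and consequently}\qquad \mathbb{E}\big[|R_k(t)-r_k|\big]\le \sqrt{\frac{3}{c\,t}}\;\sigma_k,$$ where $c=\lambda_2/|E|$ and $\sigma_k=n^{3/2}\sqrt{u_k(1-u_k)}$ with $u_k=(r_k-1)/n$.
   Context: Let $n\ge 2$ and let $\mathcal G=(V,E)$ be a connected, non-bipartite, undirected graph with vertex set $V=[n]$; $\mathbf{L}=\mathbf{D}-\mathbf{A}$ is its Laplacian and $\lambda_2>0$ the second smallest eigenvalue of $\mathbf{L}$. Node $k$ holds a real observation $X_k$, the $X_k$ being pairwise distinct, and its rank is $r_k=1+\sum_{l=1}^n\mathbb{I}_{\{X_k>X_l\}}$. Algorithm GoRank: initialize $Y_k(0)=X_k$ and $R'_k(0)=0$ for all $k$. At each iteration $s=1,2,\dots$: (i) every node $k$ sets $R'_k(s)=(1-1/s)R'_k(s-1)+(1/s)\,\mathbb{I}_{\{X_k>Y_k(s-1)\}}$ and $R_k(s)=nR'_k(s)+1$; (ii) an edge $(i,j)\in E$ is drawn uniformly at random from $E$, independently of everything before; (iii) the auxiliary values are swapped: $Y_i(s)=Y_j(s-1)$, $Y_j(s)=Y_i(s-1)$, others unchanged. Expectations are over the random edge sampling. *)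

theory Defs
  imports "HOL-Probability.Probability" "Jordan_Normal_Form.Char_Poly"
begin

definition graph_on :: "nat \<Rightarrow> nat set set \<Rightarrow> bool" where
  "graph_on n E \<longleftrightarrow> (\<forall>e\<in>E. e \<subseteq> {0..<n} \<and> card e = 2)"

definition adj_rel :: "nat set set \<Rightarrow> (nat \<times> nat) set" where
  "adj_rel E = {(a, b). {a, b} \<in> E}"

definition connected_graph :: "nat \<Rightarrow> nat set set \<Rightarrow> bool" where
  "connected_graph n E \<longleftrightarrow> (\<forall>i<n. \<forall>j<n. (i, j) \<in> (adj_rel E)\<^sup>*)"

definition bipartite_graph :: "nat \<Rightarrow> nat set set \<Rightarrow> bool" where
  "bipartite_graph n E \<longleftrightarrow> (\<exists>A B. A \<union> B = {0..<n} \<and> A \<inter> B = {} \<and>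
      (\<forall>e\<in>E. card (e \<inter> A) = 1 \<and> card (e \<inter> B) = 1))"

definition degree :: "nat set set \<Rightarrow> nat \<Rightarrow> nat" where
  "degree E i = card {e \<in> E. i \<in> e}"

definition laplacian :: "nat \<Rightarrow> nat set set \<Rightarrow> real mat" where
  "laplacian n E = mat n n (\<lambda>(i, j). (if i = j then real (degree E i) else 0)
                                    - (if {i, j} \<in> E then 1 else 0))"

definition sorted_eigenvalues :: "real mat \<Rightarrow> real list" where
  "sorted_eigenvalues M = sorted_list_of_multiset (proots (char_poly M))"

definition lambda2 :: "nat \<Rightarrow> nat set set \<Rightarrow> real" where
  "lambda2 n E = sorted_eigenvalues (laplacian n E) ! 1"

definition rank :: "nat \<Rightarrow> (nat \<Rightarrow> real) \<Rightarrow> nat \<Rightarrow> real" where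
  "rank n X k = 1 + (\<Sum>l<n. if X k > X l then 1 else 0)"

definition swap_edge :: "nat set \<Rightarrow> (nat \<Rightarrow> real) \<Rightarrow> (nat \<Rightarrow> real)" where
  "swap_edge e Y = (\<lambda>k. if k \<in> e then Y (THE l. l \<in> e \<and> l \<noteq> k) else Y k)"

text \<open>Auxiliary values Y(s), driven by the sequence of sampled edges es (es ! (s-1) is the
  edge drawn at iteration s).\<close>
fun gorank_Y :: "(nat \<Rightarrow> real) \<Rightarrow> nat set list \<Rightarrow> nat \<Rightarrow> (nat \<Rightarrow> real)" where
  "gorank_Y X es 0 = X"
| "gorank_Y X es (Suc s) = swap_edge (es ! s) (gorank_Y X es s)"

fun gorank_R' :: "(nat \<Rightarrow> real) \<Rightarrow> nat set list \<Rightarrow> nat \<Rightarrow> nat \<Rightarrow> real" where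
  "gorank_R' X es k 0 = 0"
| "gorank_R' X es k (Suc s) =
     (1 - 1 / real (Suc s)) * gorank_R' X es k s
     + (1 / real (Suc s)) * (if X k > gorank_Y X es s k then 1 else 0)"

definition gorank_R :: "nat \<Rightarrow> (nat \<Rightarrow> real) \<Rightarrow> nat set list \<Rightarrow> nat \<Rightarrow> nat \<Rightarrow> real" where
  "gorank_R n X es k s = real n * gorank_R' X es k s + 1"

text \<open>Distribution of the first t sampled edges: i.i.d. uniform on E, i.e. uniform on E^t.\<close>
definition edge_seqs :: "nat set set \<Rightarrow> nat \<Rightarrow> nat set list pmf" where
  "edge_seqs E t = pmf_of_set {es. length es = t \<and> set es \<subseteq> E}"

end

theory Submission
  imports Defs
begin

definition ip :: "nat \<Rightarrow> (nat \<Rightarrow> real) \<Rightarrow> (nat \<Rightarrow> real) \<Rightarrow> real" where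
  "ip n x y = (\<Sum>j<n. x j * y j)"

definition mv :: "nat \<Rightarrow> (nat \<Rightarrow> nat \<Rightarrow> real) \<Rightarrow> (nat \<Rightarrow> real) \<Rightarrow> nat \<Rightarrow> real" where
  "mv n M x = (\<lambda>i. if i < n then \<Sum>j<n. M i j * x j else 0)"

definition symm :: "nat \<Rightarrow> (nat \<Rightarrow> nat \<Rightarrow> real) \<Rightarrow> bool" where
  "symm n M \<longleftrightarrow> (\<forall>i<n. \<forall>j<n. M i j = M j i)"

definition supp :: "nat \<Rightarrow> (nat \<Rightarrow> real) \<Rightarrow> bool" where
  "supp n x \<longleftrightarrow> (\<forall>j. n \<le> j \<longrightarrow> x j = 0)"

definition ortho :: "nat \<Rightarrow> (nat \<Rightarrow> nat \<Rightarrow> real) \<Rightarrow> nat \<Rightarrow> bool" where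
  "ortho n q k \<longleftrightarrow> (\<forall>i<k. \<forall>i'<k. ip n (q i) (q i') = (if i = i' then 1 else 0))"

lemma ip_comm: "ip n x y = ip n y x"
  unfolding ip_def by (simp add: mult.commute)

lemma ip_mv_sym: assumes "symm n M" shows "ip n x (mv n M y) = ip n (mv n M x) y"
proof -
  have "ip n x (mv n M y) = (\<Sum>i<n. \<Sum>j<n. x i * M i j * y j)"
    unfolding ip_def mv_def by (simp add: sum_distrib_left mult.assoc)
  also have "\<dots> = (\<Sum>j<n. \<Sum>i<n. x i * M i j * y j)" by (rule sum.swap)
  also have "\<dots> = (\<Sum>j<n. \<Sum>i<n. M j i * x i * y j)"
    using assms unfolding symm_def by (intro sum.cong refl) (auto simp: mult.commute)
  also have "\<dots> = ip n (mv n M x) y"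
    unfolding ip_def mv_def by (simp add: sum_distrib_right)
  finally show ?thesis .
qed

lemma ip_self_nonneg: "ip n x x \<ge> 0"
  unfolding ip_def by (auto intro: sum_nonneg)

lemma ip_self_zero: assumes "ip n x x = 0" "j < n" shows "x j = 0"
proof -
  have "\<forall>i\<in>{..<n}. x i * x i = 0"
    using assms(1) unfolding ip_def by (subst sum_nonneg_eq_0_iff[symmetric]) auto
  thus ?thesis using assms(2) by auto
qed

lemma comp_sq_le: assumes "j < n" shows "x j * x j \<le> ip n x x"
proof -
  have "x j * x j = (\<Sum>i\<in>{j}. x i * x i)" by simp
  also have "\<dots> \<le> ip n x x" unfolding ip_def
    by (rule sum_mono2) (use assms in auto)
  finally show ?thesis .
qed

lemma ip_lin_left: "ip n (\<lambda>j. a * x j + b * y j) z = a * ip n x z + b * ip n y z"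
  unfolding ip_def by (simp add: algebra_simps sum.distrib sum_distrib_left)

lemma ip_lin_right: "ip n z (\<lambda>j. a * x j + b * y j) = a * ip n z x + b * ip n z y"
  unfolding ip_def by (simp add: algebra_simps sum.distrib sum_distrib_left)

lemma ip_scale_left: "ip n (\<lambda>j. a * x j) z = a * ip n x z"
  unfolding ip_def by (simp add: algebra_simps sum_distrib_left)

lemma ip_scale_right: "ip n z (\<lambda>j. a * x j) = a * ip n z x"
  unfolding ip_def by (simp add: algebra_simps sum_distrib_left)

lemma ip_sum_left: "ip n (\<lambda>j. \<Sum>i\<in>I. c i * y i j) z = (\<Sum>i\<in>I. c i * ip n (y i) z)"
  unfolding ip_def by (simp add: sum_distrib_right sum_distrib_left mult.assoc sum.swap[of _ I])

lemma mv_lin: "mv n M (\<lambda>j. a * x j + b * y j) = (\<lambda>j. a * mv n M x j + b * mv n M y j)"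
  unfolding mv_def by (auto simp: algebra_simps sum.distrib sum_distrib_left)

lemma mv_scale: "mv n M (\<lambda>j. a * x j) = (\<lambda>j. a * mv n M x j)"
  unfolding mv_def by (auto simp: algebra_simps sum_distrib_left)

lemma supp_mv: "supp n (mv n M x)"
  unfolding supp_def mv_def by auto




definition rvec :: "nat \<Rightarrow> (nat \<Rightarrow> nat \<Rightarrow> real) \<Rightarrow> nat \<Rightarrow> nat \<Rightarrow> nat \<Rightarrow> real" where
  "rvec n q k j = (\<lambda>l. (if l = j then 1 else 0) - (\<Sum>i<k. q i j * q i l))"

lemma ip_delta: "j < n \<Longrightarrow> ip n (\<lambda>l. if l = j then 1 else 0) y = y j"
proof -
  assume j: "j < n"
  have "(\<Sum>l<n. (if l = j then 1 else 0) * y l) = (\<Sum>l<n. if l = j then y l else 0)"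
    by (intro sum.cong) auto
  thus ?thesis unfolding ip_def using j by simp
qed

lemma ip_rvec: "j < n \<Longrightarrow> ip n z (rvec n q k j) = z j - (\<Sum>i<k. q i j * ip n z (q i))"
proof -
  assume j: "j < n"
  have "ip n z (rvec n q k j) = ip n (\<lambda>l. if l = j then 1 else 0) z - (\<Sum>l<n. \<Sum>i<k. z l * (q i j * q i l))"
    unfolding ip_def rvec_def by (simp add: right_diff_distrib sum_subtractf sum_distrib_left mult.commute)
  also have "(\<Sum>l<n. \<Sum>i<k. z l * (q i j * q i l)) = (\<Sum>i<k. \<Sum>l<n. z l * (q i j * q i l))"
    by (rule sum.swap)
  also have "\<dots> = (\<Sum>i<k. q i j * ip n z (q i))"
    unfolding ip_def by (simp add: sum_distrib_left algebra_simps)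
  finally show ?thesis using ip_delta[OF j] by simp
qed

lemma rvec_orth: assumes "ortho n q k" "i < k" "j < n" shows "ip n (q i) (rvec n q k j) = 0"
proof -
  have "(\<Sum>i'<k. q i' j * ip n (q i) (q i')) = (\<Sum>i'<k. if i' = i then q i j else 0)"
    using assms(1,2) unfolding ortho_def by (intro sum.cong refl) auto
  also have "\<dots> = q i j" using assms(2) by simp
  finally show ?thesis using ip_rvec[OF assms(3)] by simp
qed

lemma rvec_norm: assumes "ortho n q k" "j < n" shows "ip n (rvec n q k j) (rvec n q k j) = 1 - (\<Sum>i<k. q i j * q i j)"
proof -
  have "ip n (rvec n q k j) (rvec n q k j) = rvec n q k j j - (\<Sum>i<k. q i j * ip n (rvec n q k j) (q i))"
    by (rule ip_rvec[OF assms(2)])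
  also have "(\<Sum>i<k. q i j * ip n (rvec n q k j) (q i)) = 0"
    using rvec_orth[OF assms(1) _ assms(2)] by (simp add: ip_comm)
  finally show ?thesis by (simp add: rvec_def)
qed

lemma rvec_sum: assumes "ortho n q k" "\<forall>i<k. supp n (q i)"
  shows "(\<Sum>j<n. ip n (rvec n q k j) (rvec n q k j)) = real n - real k"
proof -
  have "(\<Sum>j<n. ip n (rvec n q k j) (rvec n q k j)) = (\<Sum>j<n. 1 - (\<Sum>i<k. q i j * q i j))"
    using rvec_norm[OF assms(1)] by simp
  also have "\<dots> = real n - (\<Sum>j<n. \<Sum>i<k. q i j * q i j)"
    by (simp add: sum_subtractf)
  also have "(\<Sum>j<n. \<Sum>i<k. q i j * q i j) = (\<Sum>i<k. ip n (q i) (q i))"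
    unfolding ip_def by (rule sum.swap)
  also have "(\<Sum>i<k. ip n (q i) (q i)) = real k"
    using assms(1) unfolding ortho_def by simp
  finally show ?thesis .
qed

lemma supp_rvec: assumes "\<forall>i<k. supp n (q i)" "j < n" shows "supp n (rvec n q k j)"
  using assms unfolding supp_def rvec_def by auto

lemma exists_orth_unit:
  assumes "ortho n q k" "\<forall>i<k. supp n (q i)" "k < n"
  shows "\<exists>x. supp n x \<and> ip n x x = 1 \<and> (\<forall>i<k. ip n (q i) x = 0)"
proof -
  have "\<exists>j<n. ip n (rvec n q k j) (rvec n q k j) > 0"
  proof (rule ccontr)
    assume "\<not> ?thesis"
    hence "(\<Sum>j<n. ip n (rvec n q k j) (rvec n q k j)) \<le> 0"
      by (intro sum_nonpos) (metis lessThan_iff not_less)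
    thus False using rvec_sum[OF assms(1,2)] assms(3) by simp
  qed
  then obtain j where j: "j < n" and pos: "ip n (rvec n q k j) (rvec n q k j) > 0" by blast
  define r where "r = rvec n q k j"
  define s where "s = sqrt (ip n r r)"
  have s: "s > 0" using pos unfolding s_def r_def by simp
  define x where "x = (\<lambda>l. (1 / s) * r l)"
  have "supp n x" using supp_rvec[OF assms(2) j] unfolding x_def r_def supp_def by auto
  moreover have "ip n x x = 1"
    unfolding x_def ip_scale_left ip_scale_right using s pos
    by (simp add: s_def r_def power2_eq_square[symmetric])
  moreover have "\<forall>i<k. ip n (q i) x = 0"
    unfolding x_def ip_scale_right using rvec_orth[OF assms(1) _ j] by (simp add: r_def)
  ultimately show ?thesis by blast
qed

lemma completeness:
  assumes "ortho n q n" "\<forall>i<n. supp n (q i)" "j < n" "l < n"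
  shows "(\<Sum>i<n. q i j * q i l) = (if l = j then 1 else 0)"
proof -
  have "(\<Sum>j<n. ip n (rvec n q n j) (rvec n q n j)) = 0" using rvec_sum[OF assms(1,2)] by simp
  hence "\<forall>j\<in>{..<n}. ip n (rvec n q n j) (rvec n q n j) = 0"
    by (subst sum_nonneg_eq_0_iff[symmetric]) (auto intro: ip_self_nonneg)
  hence "rvec n q n j l = 0" using ip_self_zero assms(3,4) by blast
  thus ?thesis unfolding rvec_def by simp
qed

lemma parseval_expand:
  assumes "ortho n q n" "\<forall>i<n. supp n (q i)" "j < n"
  shows "x j = (\<Sum>i<n. ip n (q i) x * q i j)"
proof -
  have "(\<Sum>i<n. ip n (q i) x * q i j) = (\<Sum>i<n. \<Sum>l<n. q i j * q i l * x l)"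
    unfolding ip_def sum_distrib_right by (intro sum.cong refl) (simp add: mult_ac)
  also have "\<dots> = (\<Sum>l<n. \<Sum>i<n. q i j * q i l * x l)" by (rule sum.swap)
  also have "\<dots> = (\<Sum>l<n. (\<Sum>i<n. q i j * q i l) * x l)"
    by (simp add: sum_distrib_right)
  also have "\<dots> = (\<Sum>l<n. (if l = j then x l else 0))"
    using completeness[OF assms(1,2,3)] by (intro sum.cong refl) auto
  also have "\<dots> = x j" using assms(3) by simp
  finally show ?thesis by simp
qed




lemma cont_coord: "continuous_on S (\<lambda>x::nat \<Rightarrow> real. x j)"
  by (rule continuous_on_subset[OF continuous_on_product_coordinates subset_UNIV])

lemma cont_ip: "continuous_on S (\<lambda>x. ip n (a x) (b x))"
  if "\<And>j. continuous_on S (\<lambda>x. a x j)" "\<And>j. continuous_on S (\<lambda>x. b x j)"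
  unfolding ip_def by (intro continuous_on_sum continuous_on_mult that)

definition qf :: "nat \<Rightarrow> (nat \<Rightarrow> nat \<Rightarrow> real) \<Rightarrow> (nat \<Rightarrow> real) \<Rightarrow> real" where
  "qf n M x = ip n x (mv n M x)"

lemma qf_alt: "qf n M x = (\<Sum>j<n. \<Sum>l<n. x j * M j l * x l)"
  unfolding qf_def ip_def mv_def by (simp add: sum_distrib_left mult.assoc)

lemma cont_qf: "continuous_on S (qf n M)"
proof -
  have "continuous_on S (\<lambda>x. x j * M j l * x l)" for j l
    by (rule continuous_on_mult[OF continuous_on_mult[OF cont_coord continuous_on_const] cont_coord])
  thus ?thesis unfolding qf_alt by (intro continuous_on_sum) auto
qed

lemma compact_box: "compact (Pi UNIV (\<lambda>j::nat. if j < n then {-1..1::real} else {0}))"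
proof -
  have "compactin (product_topology (\<lambda>i. euclidean) UNIV) (PiE UNIV (\<lambda>j::nat. if j < n then {-1..1::real} else {0}))"
    apply (rule compactin_PiE[THEN iffD2])
    apply (rule disjI2)
    apply (intro ballI)
    apply (simp only: compactin_euclidean_iff)
    apply (simp)
    done
  hence "compactin euclidean (PiE UNIV (\<lambda>j::nat. if j < n then {-1..1::real} else {0}))"
    by (simp only: euclidean_product_topology)
  thus ?thesis by (simp only: compactin_euclidean_iff PiE_UNIV_domain)
qed

lemma spectral_step:
  assumes sym: "symm n M" and orth: "ortho n q k" and suppq: "\<forall>i<k. supp n (q i)"
    and eig: "\<forall>i<k. mv n M (q i) = (\<lambda>j. \<mu> i * q i j)" and kn: "k < n"
  shows "\<exists>v lam. supp n v \<and> ip n v v = 1 \<and> (\<forall>i<k. ip n (q i) v = 0) \<and> mv n M v = (\<lambda>j. lam * v j)"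
proof -
  define K where "K = {x. (\<forall>j. n \<le> j \<longrightarrow> x j = 0) \<and> ip n x x = 1 \<and> (\<forall>i<k. ip n (q i) x = 0)}"
  define B where "B = Pi UNIV (\<lambda>j::nat. if j < n then {-1..1::real} else {0})"
  have KB: "K \<subseteq> B"
  proof
    fix x assume x: "x \<in> K"
    have "x j \<in> (if j < n then {-1..1} else {0})" for j
    proof (cases "j < n")
      case True
      have "x j * x j \<le> 1" using comp_sq_le[OF True, of x] x unfolding K_def by auto
      hence "\<bar>x j\<bar> \<le> 1" using abs_square_le_1[of "x j"] by (simp add: power2_eq_square)
      thus ?thesis using True by auto
    next
      case False thus ?thesis using x unfolding K_def by auto
    qed
    thus "x \<in> B" unfolding B_def by auto
  qed
  have closedK: "closed K"
  proof -
    have "K = (\<Inter>j\<in>{n..}. {x. x j = 0}) \<inter> {x. ip n x x = 1} \<inter> (\<Inter>i\<in>{..<k}. {x. ip n (q i) x = 0})"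
      unfolding K_def by auto
    moreover have "closed {x::nat\<Rightarrow>real. x j = 0}" for j
      by (rule closed_Collect_eq) (auto intro: cont_coord)
    moreover have "closed {x. ip n x x = 1}"
      by (rule closed_Collect_eq) (auto intro!: cont_ip cont_coord)
    moreover have "closed {x. ip n (q i) x = 0}" for i
      by (rule closed_Collect_eq) (auto intro!: cont_ip cont_coord)
    ultimately show ?thesis by (auto intro!: closed_Int closed_INT)
  qed
  have compK: "compact K"
  proof -
    have "compact (B \<inter> K)" unfolding B_def by (rule compact_Int_closed[OF compact_box closedK])
    moreover have "B \<inter> K = K" using KB by auto
    ultimately show ?thesis by simp
  qed
  have neK: "K \<noteq> {}"
    using exists_orth_unit[OF orth suppq kn] unfolding K_def supp_def by blast
  obtain x where xK: "x \<in> K" and xmax: "\<forall>y\<in>K. qf n M y \<le> qf n M x"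
    using continuous_attains_sup[OF compK neK cont_qf] by blast
  have xsupp: "supp n x" and xnorm: "ip n x x = 1" and xorth: "\<forall>i<k. ip n (q i) x = 0"
    using xK unfolding K_def supp_def by auto
  define lam where "lam = qf n M x"
  define w where "w = (\<lambda>j. 1 * mv n M x j + (- lam) * x j)"
  have wsupp: "supp n w" using xsupp supp_mv[of n M x] unfolding w_def supp_def by auto
  have worth: "ip n (q i) w = 0" if i: "i < k" for i
  proof -
    have "ip n (q i) (mv n M x) = ip n (mv n M (q i)) x" by (rule ip_mv_sym[OF sym])
    also have "\<dots> = \<mu> i * ip n (q i) x" using eig i by (simp add: ip_scale_left)
    finally show ?thesis unfolding w_def ip_lin_right using xorth i by simp
  qed
  have wx: "ip n x w = 0"
    unfolding w_def ip_lin_right using xnorm by (simp add: lam_def qf_def)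
  have wmx: "ip n w (mv n M x) = ip n w w"
  proof -
    have "mv n M x = (\<lambda>j. 1 * w j + lam * x j)" unfolding w_def by auto
    hence "ip n w (mv n M x) = ip n w w + lam * ip n w x"
      using ip_lin_right[of n w 1 w lam x] by simp
    thus ?thesis using wx by (simp add: ip_comm)
  qed
  have ww0: "ip n w w = 0"
  proof (rule ccontr)
    assume "ip n w w \<noteq> 0"
    hence beta: "ip n w w > 0" using ip_self_nonneg[of n w] by linarith
    define \<beta> where "\<beta> = ip n w w"
    define C where "C = qf n M w - lam * \<beta>"
    define \<epsilon> where "\<epsilon> = \<beta> / (\<bar>C\<bar> + 1)"
    have eps: "\<epsilon> > 0" using beta unfolding \<epsilon>_def \<beta>_def by simp
    define z where "z = (\<lambda>j. 1 * x j + \<epsilon> * w j)"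
    have zz: "ip n z z = 1 + \<epsilon>^2 * \<beta>"
      unfolding z_def ip_lin_left ip_lin_right using xnorm wx
      by (simp add: ip_comm[of n w x] \<beta>_def power2_eq_square)
    have zpos: "ip n z z > 0" using zz beta eps unfolding \<beta>_def by (simp add: add_pos_nonneg)
    have qz: "qf n M z = lam + 2 * \<epsilon> * \<beta> + \<epsilon>^2 * qf n M w"
    proof -
      have "qf n M z = ip n z (\<lambda>j. 1 * mv n M x j + \<epsilon> * mv n M w j)"
        unfolding qf_def z_def mv_lin by simp
      also have "\<dots> = ip n x (mv n M x) + \<epsilon> * ip n x (mv n M w) + \<epsilon> * ip n w (mv n M x) + \<epsilon> * \<epsilon> * ip n w (mv n M w)"
        unfolding z_def ip_lin_left ip_lin_right by (simp add: algebra_simps)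
      also have "ip n x (mv n M w) = ip n w (mv n M x)"
        using ip_mv_sym[OF sym, of x w] by (simp add: ip_comm)
      finally have "qf n M z = ip n x (mv n M x) + \<epsilon> * ip n w (mv n M x) + \<epsilon> * ip n w (mv n M x) + \<epsilon> * \<epsilon> * ip n w (mv n M w)" .
      thus ?thesis using wmx unfolding lam_def qf_def \<beta>_def power2_eq_square by simp
    qed
    define s where "s = sqrt (ip n z z)"
    have s: "s > 0" using zpos unfolding s_def by simp
    define z' where "z' = (\<lambda>j. (1 / s) * z j)"
    have "z' \<in> K"
    proof -
      have "\<forall>j. n \<le> j \<longrightarrow> z' j = 0" using xsupp wsupp unfolding z'_def z_def supp_def by auto
      moreover have "ip n z' z' = 1"
        unfolding z'_def ip_scale_left ip_scale_right using s zpos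
        by (simp add: s_def power2_eq_square[symmetric])
      moreover have "\<forall>i<k. ip n (q i) z' = 0"
        unfolding z'_def z_def ip_scale_right ip_lin_right using xorth worth by simp
      ultimately show ?thesis unfolding K_def by blast
    qed
    hence "qf n M z' \<le> lam" using xmax unfolding lam_def by blast
    moreover have "qf n M z' = qf n M z / (s * s)"
      unfolding qf_def z'_def mv_scale ip_scale_left ip_scale_right by simp
    moreover have "s * s = 1 + \<epsilon>^2 * \<beta>" using zz zpos unfolding s_def by simp
    ultimately have "lam + 2 * \<epsilon> * \<beta> + \<epsilon>^2 * qf n M w \<le> lam * (1 + \<epsilon>^2 * \<beta>)"
      using qz zpos zz by (simp add: divide_le_eq)
    hence "2 * \<epsilon> * \<beta> + \<epsilon> * \<epsilon> * C \<le> 0" unfolding C_def by (simp add: algebra_simps power2_eq_square)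
    hence "\<epsilon> * (2 * \<beta> + \<epsilon> * C) \<le> 0" by (simp add: algebra_simps)
    hence "2 * \<beta> + \<epsilon> * C \<le> 0" using eps by (simp add: mult_le_0_iff)
    moreover have "\<epsilon> * \<bar>C\<bar> < \<beta>"
    proof -
      have "\<epsilon> * \<bar>C\<bar> = \<beta> * (\<bar>C\<bar> / (\<bar>C\<bar> + 1))" unfolding \<epsilon>_def by simp
      also have "\<dots> < \<beta> * 1" using beta unfolding \<beta>_def by (intro mult_strict_left_mono) auto
      finally show ?thesis by simp
    qed
    moreover have "- (\<epsilon> * \<bar>C\<bar>) \<le> \<epsilon> * C" 
    proof -
      have "\<epsilon> * (- \<bar>C\<bar>) \<le> \<epsilon> * C" using eps by (intro mult_left_mono) auto
      thus ?thesis by simp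
    qed
    ultimately show False using beta unfolding \<beta>_def by linarith
  qed
  have w0: "w j = 0" if "j < n" for j by (rule ip_self_zero[OF ww0 that])
  have mvx: "mv n M x = (\<lambda>j. lam * x j)"
  proof (intro ext)
    fix j show "mv n M x j = lam * x j"
    proof (cases "j < n")
      case True
      then have "mv n M x j + - lam * x j = 0" using w0[OF True] unfolding w_def by simp
      thus ?thesis by linarith
    next
      case False thus ?thesis using xsupp supp_mv[of n M x] unfolding supp_def by simp
    qed
  qed
  show ?thesis
    by (rule exI[of _ x], rule exI[of _ lam]) (use xsupp xnorm xorth mvx in simp)
qed




lemma spectral_basis:
  assumes sym: "symm n M" and q0s: "supp n q0" "ip n q0 q0 = 1" "mv n M q0 = (\<lambda>j. \<mu>0 * q0 j)"
  shows "\<exists>q \<mu>. q 0 = q0 \<and> \<mu> 0 = \<mu>0 \<and> ortho n q n \<and> (\<forall>i<n. supp n (q i) \<and> mv n M (q i) = (\<lambda>j. \<mu> i * q i j))"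
proof -
  have "1 \<le> k \<longrightarrow> k \<le> n \<longrightarrow> (\<exists>q \<mu>. q 0 = q0 \<and> \<mu> 0 = \<mu>0 \<and> ortho n q k \<and> (\<forall>i<k. supp n (q i) \<and> mv n M (q i) = (\<lambda>j. \<mu> i * q i j)))" for k
  proof (induction k)
    case 0 thus ?case by simp
  next
    case (Suc k)
    show ?case
    proof (cases "k = 0")
      case True
      have "ortho n (\<lambda>_. q0) 1" unfolding ortho_def using q0s by simp
      thus ?thesis using True q0s by (intro impI exI[of _ "\<lambda>_. q0"] exI[of _ "\<lambda>_. \<mu>0"]) simp
    next
      case False
      show ?thesis
      proof (intro impI)
        assume "Suc k \<le> n"
        hence kn: "k < n" and "1 \<le> k" "k \<le> n" using False by auto
        then obtain q \<mu> where q: "q 0 = q0" "\<mu> 0 = \<mu>0" "ortho n q k"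
          and qi: "\<forall>i<k. supp n (q i) \<and> mv n M (q i) = (\<lambda>j. \<mu> i * q i j)"
          using Suc.IH by blast
        obtain v lam where v: "supp n v" "ip n v v = 1" "\<forall>i<k. ip n (q i) v = 0" "mv n M v = (\<lambda>j. lam * v j)"
          using spectral_step[OF sym q(3) _ _ kn, of \<mu>] qi by blast
        define q' where "q' = q(k := v)"
        define \<mu>' where "\<mu>' = \<mu>(k := lam)"
        have "ortho n q' (Suc k)"
          unfolding ortho_def
        proof (intro allI impI)
          fix i i' assume i: "i < Suc k" and i': "i' < Suc k"
          show "ip n (q' i) (q' i') = (if i = i' then 1 else 0)"
          proof (cases "i = k")
            case True
            show ?thesis
            proof (cases "i' = k")
              case True thus ?thesis using \<open>i = k\<close> v(2) unfolding q'_def by simp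
            next
              case False
              hence "i' < k" using i' by simp
              thus ?thesis using \<open>i = k\<close> v(3) False unfolding q'_def by (simp add: ip_comm)
            qed
          next
            case False
            hence ik: "i < k" using i by simp
            show ?thesis
            proof (cases "i' = k")
              case True thus ?thesis using ik v(3) unfolding q'_def by simp
            next
              case False
              hence "i' < k" using i' by simp
              thus ?thesis using ik q(3) \<open>i \<noteq> k\<close> False unfolding q'_def ortho_def by simp
            qed
          qed
        qed
        moreover have "\<forall>i<Suc k. supp n (q' i) \<and> mv n M (q' i) = (\<lambda>j. \<mu>' i * q' i j)"
          using qi v unfolding q'_def \<mu>'_def by (auto simp: less_Suc_eq)
        moreover have "q' 0 = q0" "\<mu>' 0 = \<mu>0" using q False unfolding q'_def \<mu>'_def by auto
        ultimately show "\<exists>q \<mu>. q 0 = q0 \<and> \<mu> 0 = \<mu>0 \<and> ortho n q (Suc k) \<and> (\<forall>i<Suc k. supp n (q i) \<and> mv n M (q i) = (\<lambda>j. \<mu> i * q i j))"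
          by blast
      qed
    qed
  qed
  note this[of n]
  moreover have "n \<ge> 1 \<or> n = 0" by auto
  ultimately show ?thesis
  proof (elim disjE)
    assume "n = 0"
    thus ?thesis using q0s unfolding ortho_def by auto
  qed auto
qed

definition sw :: "nat set \<Rightarrow> nat \<Rightarrow> nat" where
  "sw e k = (if k \<in> e then (THE l. l \<in> e \<and> l \<noteq> k) else k)"

lemma swap_edge_sw: "swap_edge e Y = Y \<circ> sw e"
  unfolding swap_edge_def sw_def by (auto simp: fun_eq_iff)

lemma sw_pair: "a \<noteq> b \<Longrightarrow> sw {a, b} a = b"
  unfolding sw_def by (auto intro!: the_equality)

lemma sw_pair2: "a \<noteq> b \<Longrightarrow> sw {a, b} b = a"
  using sw_pair[of b a] by (simp add: insert_commute)

lemma sw_out: "k \<notin> e \<Longrightarrow> sw e k = k"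
  unfolding sw_def by simp

lemma edge_form: assumes "graph_on n E" "e \<in> E"
  shows "\<exists>a b. a \<noteq> b \<and> a < n \<and> b < n \<and> e = {a, b}"
proof -
  have "card e = 2" "e \<subseteq> {0..<n}" using assms unfolding graph_on_def by auto
  then obtain a b where "e = {a, b}" "a \<noteq> b" by (auto simp: card_2_iff)
  thus ?thesis using \<open>e \<subseteq> {0..<n}\<close> by auto
qed

lemma sw_lt: assumes "graph_on n E" "e \<in> E" "j < n" shows "sw e j < n"
proof -
  obtain a b where ab: "a \<noteq> b" "a < n" "b < n" "e = {a, b}" using edge_form[OF assms(1,2)] by blast
  show ?thesis
  proof (cases "j = a \<or> j = b")
    case True thus ?thesis using ab sw_pair[of a b] sw_pair2[of a b] by auto
  next
    case False thus ?thesis using ab assms(3) sw_out[of j e] by auto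
  qed
qed

lemma sw_sw: assumes "graph_on n E" "e \<in> E" shows "sw e (sw e j) = j"
proof -
  obtain a b where ab: "a \<noteq> b" "a < n" "b < n" "e = {a, b}" using edge_form[OF assms(1,2)] by blast
  show ?thesis
  proof (cases "j = a \<or> j = b")
    case True thus ?thesis using ab sw_pair[of a b] sw_pair2[of a b] by auto
  next
    case False thus ?thesis using ab sw_out[of j e] by auto
  qed
qed

lemma bij_sw: assumes "graph_on n E" "e \<in> E" shows "bij_betw (sw e) {..<n} {..<n}"
  by (rule bij_betw_byWitness[where f' = "sw e"]) (use sw_sw[OF assms] sw_lt[OF assms] in auto)

fun compL :: "nat set list \<Rightarrow> nat \<Rightarrow> nat" where
  "compL [] = id"
| "compL (e # es) = sw e \<circ> compL es"

lemma compL_append: "compL (xs @ ys) = compL xs \<circ> compL ys"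
  by (induction xs) auto

lemma bij_compL: assumes "graph_on n E" "set es \<subseteq> E" shows "bij_betw (compL es) {..<n} {..<n}"
  using assms(2)
proof (induction es)
  case Nil thus ?case using bij_betw_id[of "{..<n}"] by (simp add: id_def)
next
  case (Cons e es)
  hence 1: "bij_betw (compL es) {..<n} {..<n}" and 2: "e \<in> E" by auto
  from bij_betw_trans[OF 1 bij_sw[OF assms(1) 2]] show ?case by (simp add: comp_def)
qed

lemma gorank_Y_comp: "s \<le> length es \<Longrightarrow> gorank_Y X es s = X \<circ> compL (take s es)"
proof (induction s)
  case 0 thus ?case by simp
next
  case (Suc s)
  hence "s < length es" by simp
  thus ?case using Suc by (simp add: swap_edge_sw take_Suc_conv_app_nth compL_append)
qed

definition adjm :: "nat set set \<Rightarrow> nat \<Rightarrow> nat \<Rightarrow> real" where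
  "adjm E i j = (if {i, j} \<in> E then 1 else 0)"

definition Lm :: "nat set set \<Rightarrow> nat \<Rightarrow> nat \<Rightarrow> real" where
  "Lm E i j = (if i = j then real (degree E i) else 0) - adjm E i j"

lemma adjm_sym: "adjm E i j = adjm E j i"
  unfolding adjm_def by (simp add: insert_commute)

lemma finite_E: "graph_on n E \<Longrightarrow> finite E"
proof -
  assume "graph_on n E"
  hence "E \<subseteq> Pow {0..<n}" unfolding graph_on_def by auto
  thus "finite E" by (rule finite_subset) simp
qed

lemma adj_lt: assumes "graph_on n E" "{i, j} \<in> E" shows "i < n" "j < n" "i \<noteq> j"
proof -
  have "card {i, j} = 2" "{i, j} \<subseteq> {0..<n}" using assms unfolding graph_on_def by auto
  thus "i < n" "j < n" "i \<noteq> j" by (auto split: if_splits)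
qed

lemma nbr_bij: assumes "graph_on n E" "i < n"
  shows "bij_betw (\<lambda>j. {i, j}) {j. j < n \<and> {i, j} \<in> E} {e \<in> E. i \<in> e}"
proof (rule bij_betw_byWitness[where f' = "\<lambda>e. sw e i"])
  show "\<forall>j\<in>{j. j < n \<and> {i, j} \<in> E}. sw {i, j} i = j"
    using adj_lt[OF assms(1)] sw_pair by blast
  show "\<forall>e\<in>{e \<in> E. i \<in> e}. {i, sw e i} = e"
  proof
    fix e assume e: "e \<in> {e \<in> E. i \<in> e}"
    then obtain a b where ab: "a \<noteq> b" "a < n" "b < n" "e = {a, b}" using edge_form[OF assms(1)] by blast
    show "{i, sw e i} = e" using e ab sw_pair[of a b] sw_pair2[of a b] by auto
  qed
  show "(\<lambda>j. {i, j}) ` {j. j < n \<and> {i, j} \<in> E} \<subseteq> {e \<in> E. i \<in> e}" by auto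
  show "(\<lambda>e. sw e i) ` {e \<in> E. i \<in> e} \<subseteq> {j. j < n \<and> {i, j} \<in> E}"
  proof
    fix j assume "j \<in> (\<lambda>e. sw e i) ` {e \<in> E. i \<in> e}"
    then obtain e where e: "e \<in> E" "i \<in> e" "j = sw e i" by blast
    then obtain a b where ab: "a \<noteq> b" "a < n" "b < n" "e = {a, b}" using edge_form[OF assms(1)] by blast
    have "{i, j} = e" using e ab sw_pair[of a b] sw_pair2[of a b] by auto
    thus "j \<in> {j. j < n \<and> {i, j} \<in> E}" using e ab sw_lt[OF assms(1) e(1) assms(2)] by auto
  qed
qed

lemma degree_sum: assumes "graph_on n E" "i < n"
  shows "real (degree E i) = (\<Sum>j<n. adjm E i j)"
proof -
  have "degree E i = card {j. j < n \<and> {i, j} \<in> E}"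
    unfolding degree_def using bij_betw_same_card[OF nbr_bij[OF assms]] by simp
  also have "real \<dots> = (\<Sum>j\<in>{j. j < n \<and> {i, j} \<in> E}. 1)" by simp
  also have "{j. j < n \<and> {i, j} \<in> E} = {j \<in> {..<n}. {i, j} \<in> E}" by auto
  also have "(\<Sum>j\<in>{j \<in> {..<n}. {i, j} \<in> E}. 1) = (\<Sum>j<n. adjm E i j)"
    unfolding adjm_def by (subst sum.inter_filter) auto
  finally show ?thesis .
qed

lemma degree_le: assumes "graph_on n E" shows "degree E i \<le> card E"
  unfolding degree_def by (rule card_mono[OF finite_E[OF assms]]) auto

lemma symm_Lm: "symm n (Lm E)"
  unfolding symm_def Lm_def using adjm_sym by auto

lemma qf_Lm: assumes "graph_on n E"
  shows "qf n (Lm E) x = (\<Sum>i<n. \<Sum>j<n. adjm E i j * (x i - x j)^2) / 2"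
proof -
  have A: "(\<Sum>i<n. \<Sum>j<n. x i * Lm E i j * x j) = (\<Sum>i<n. \<Sum>j<n. adjm E i j * x i * x i) - (\<Sum>i<n. \<Sum>j<n. adjm E i j * x i * x j)"
  proof -
    have "(\<Sum>j<n. x i * Lm E i j * x j) = (\<Sum>j<n. adjm E i j * x i * x i) - (\<Sum>j<n. adjm E i j * x i * x j)"
      if i: "i < n" for i
    proof -
      have "x i * Lm E i j * x j = (if i = j then real (degree E i) * x i * x i else 0) - adjm E i j * x i * x j" for j
        unfolding Lm_def by (auto simp: algebra_simps)
      hence "(\<Sum>j<n. x i * Lm E i j * x j) = (\<Sum>j<n. (if i = j then real (degree E i) * x i * x i else 0) - adjm E i j * x i * x j)"
        by simp
      also have "\<dots> = (\<Sum>j<n. (if i = j then real (degree E i) * x i * x i else 0)) - (\<Sum>j<n. adjm E i j * x i * x j)"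
        by (rule sum_subtractf)
      also have "(\<Sum>j<n. (if i = j then real (degree E i) * x i * x i else 0)) = real (degree E i) * x i * x i"
        using i by (simp add: sum.delta)
      also have "\<dots> = (\<Sum>j<n. adjm E i j * x i * x i)"
        using degree_sum[OF assms i] by (simp add: sum_distrib_right)
      finally show ?thesis .
    qed
    thus ?thesis by (simp add: sum_subtractf)
  qed
  have B: "(\<Sum>i<n. \<Sum>j<n. adjm E i j * x j * x j) = (\<Sum>i<n. \<Sum>j<n. adjm E i j * x i * x i)"
    by (subst sum.swap) (simp add: adjm_sym)
  have "(\<Sum>i<n. \<Sum>j<n. adjm E i j * (x i - x j)^2) = (\<Sum>i<n. \<Sum>j<n. adjm E i j * x i * x i) + (\<Sum>i<n. \<Sum>j<n. adjm E i j * x j * x j) - 2 * (\<Sum>i<n. \<Sum>j<n. adjm E i j * x i * x j)"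
    by (simp add: power2_eq_square algebra_simps sum.distrib sum_subtractf sum_distrib_left)
  thus ?thesis unfolding qf_alt A B by simp
qed

lemma qf_Lm_nonneg: "graph_on n E \<Longrightarrow> qf n (Lm E) x \<ge> 0"
  unfolding qf_Lm by (auto intro!: sum_nonneg simp: adjm_def)

lemma qf_Lm_zero: assumes "graph_on n E" "qf n (Lm E) x = 0" "{i, j} \<in> E"
  shows "x i = x j"
proof -
  have i: "i < n" and j: "j < n" using adj_lt[OF assms(1,3)] by auto
  have "(\<Sum>i<n. \<Sum>j<n. adjm E i j * (x i - x j)^2) = 0" using assms(2) unfolding qf_Lm[OF assms(1)] by simp
  hence "\<forall>i\<in>{..<n}. (\<Sum>j<n. adjm E i j * (x i - x j)^2) = 0"
    by (subst sum_nonneg_eq_0_iff[symmetric]) (auto intro!: sum_nonneg simp: adjm_def)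
  hence "(\<Sum>j<n. adjm E i j * (x i - x j)^2) = 0" using i by blast
  hence "\<forall>j\<in>{..<n}. adjm E i j * (x i - x j)^2 = 0"
    by (subst sum_nonneg_eq_0_iff[symmetric]) (auto simp: adjm_def)
  hence "adjm E i j * (x i - x j)^2 = 0" using j by blast
  thus ?thesis using assms(3) unfolding adjm_def by simp
qed

lemma qf_Lm_zero_const: assumes "graph_on n E" "connected_graph n E" "qf n (Lm E) x = 0" "i < n" "j < n"
  shows "x i = x j"
proof -
  have "(i, j) \<in> (adj_rel E)\<^sup>*" using assms unfolding connected_graph_def by blast
  thus ?thesis
  proof (induction rule: rtrancl_induct)
    case base thus ?case by simp
  next
    case (step b c)
    hence "{b, c} \<in> E" unfolding adj_rel_def by simp
    thus ?case using step.IH qf_Lm_zero[OF assms(1,3)] by simp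
  qed
qed

lemma qf_Lm_le: assumes "graph_on n E" shows "qf n (Lm E) x \<le> 2 * real (card E) * ip n x x"
proof -
  have "(\<Sum>i<n. \<Sum>j<n. adjm E i j * (x i - x j)^2) \<le> (\<Sum>i<n. \<Sum>j<n. adjm E i j * (2 * (x i)^2 + 2 * (x j)^2))"
  proof (intro sum_mono)
    fix i j
    have "(x i - x j)^2 \<le> 2 * (x i)^2 + 2 * (x j)^2"
      using zero_le_square[of "x i + x j"] by (simp add: power2_eq_square algebra_simps)
    thus "adjm E i j * (x i - x j)^2 \<le> adjm E i j * (2 * (x i)^2 + 2 * (x j)^2)"
      unfolding adjm_def by simp
  qed
  also have "\<dots> = 2 * (\<Sum>i<n. \<Sum>j<n. adjm E i j * (x i)^2) + 2 * (\<Sum>i<n. \<Sum>j<n. adjm E i j * (x j)^2)"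
    by (simp add: algebra_simps sum.distrib sum_distrib_left)
  also have "(\<Sum>i<n. \<Sum>j<n. adjm E i j * (x j)^2) = (\<Sum>i<n. \<Sum>j<n. adjm E i j * (x i)^2)"
    by (subst sum.swap) (simp add: adjm_sym)
  also have "(\<Sum>i<n. \<Sum>j<n. adjm E i j * (x i)^2) = (\<Sum>i<n. real (degree E i) * (x i)^2)"
    using degree_sum[OF assms] by (simp add: sum_distrib_right)
  also have "\<dots> \<le> (\<Sum>i<n. real (card E) * (x i)^2)"
    using degree_le[OF assms] by (intro sum_mono mult_right_mono) auto
  also have "\<dots> = real (card E) * ip n x x"
    unfolding ip_def by (simp add: sum_distrib_left power2_eq_square)
  finally show ?thesis unfolding qf_Lm[OF assms] by simp
qed

lemma mult_entry:
  assumes "A \<in> carrier_mat n n" "B \<in> carrier_mat n n" "i < n" "j < n"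
  shows "(A * B) $$ (i, j) = (\<Sum>l<n. A $$ (i, l) * B $$ (l, j))"
  using assms by (simp add: index_mult_mat scalar_prod_def atLeast0LessThan)

lemma proots_lin_prod: "proots (\<Prod>a\<leftarrow>xs. [:- a, 1:]) = mset (xs :: real list)"
proof (induction xs)
  case Nil thus ?case by simp
next
  case (Cons a xs)
  have nz: "(\<Prod>a\<leftarrow>xs. [:- a, 1:]) \<noteq> (0 :: real poly)"
    by (auto simp: prod_list_zero_iff)
  have "(\<Prod>a\<leftarrow>a # xs. [:- a, 1:]) = [:- a, 1:] * (\<Prod>a\<leftarrow>xs. [:- a, 1:])" by simp
  hence "proots (\<Prod>a\<leftarrow>a # xs. [:- a, 1:]) = proots [:- a, 1:] + proots (\<Prod>a\<leftarrow>xs. [:- a, 1:])"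
    using proots_mult[OF _ nz, of "[:- a, 1:]"] by simp
  also have "proots [:- a, 1:] = {#a#}" using proots_linear_factor[of "- a"] by simp
  finally show ?case using Cons.IH by simp
qed

lemma lap_entry: "i < n \<Longrightarrow> j < n \<Longrightarrow> laplacian n E $$ (i, j) = Lm E i j"
  unfolding laplacian_def Lm_def adjm_def by simp

lemma char_poly_eigen:
  assumes orth: "ortho n q n" and qs: "\<forall>i<n. supp n (q i) \<and> mv n (Lm E) (q i) = (\<lambda>j. \<mu> i * q i j)"
  shows "sorted_eigenvalues (laplacian n E) = sort (map \<mu> [0..<n])"
proof -
  define L where "L = laplacian n E"
  define Q where "Q = mat n n (\<lambda>(j, i). q i j)"
  define QT where "QT = transpose_mat Q"
  define D where "D = mat n n (\<lambda>(i, j). if i = j then \<mu> i else (0::real))"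
  have L: "L \<in> carrier_mat n n" unfolding L_def laplacian_def by simp
  have Q: "Q \<in> carrier_mat n n" unfolding Q_def by simp
  have QT: "QT \<in> carrier_mat n n" unfolding QT_def using Q by simp
  have D: "D \<in> carrier_mat n n" unfolding D_def by simp
  have QTQ: "QT * Q = 1\<^sub>m n"
  proof (rule eq_matI)
    fix i j assume i: "i < dim_row (1\<^sub>m n)" and j: "j < dim_col (1\<^sub>m n)"
    hence i: "i < n" and j: "j < n" by auto
    have "(QT * Q) $$ (i, j) = (\<Sum>l<n. QT $$ (i, l) * Q $$ (l, j))" by (rule mult_entry[OF QT Q i j])
    also have "\<dots> = (\<Sum>l<n. q i l * q j l)"
      using i j Q by (intro sum.cong refl) (simp add: QT_def Q_def)
    also have "\<dots> = (if i = j then 1 else 0)" using orth i j unfolding ortho_def ip_def by simp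
    finally show "(QT * Q) $$ (i, j) = 1\<^sub>m n $$ (i, j)" using i j by simp
  qed (use QT Q in auto)
  have QQT: "Q * QT = 1\<^sub>m n" by (rule mat_mult_left_right_inverse[OF QT Q QTQ])
  have LQ: "L * Q = Q * D"
  proof (rule eq_matI)
    fix j i assume j: "j < dim_row (Q * D)" and i: "i < dim_col (Q * D)"
    hence j: "j < n" and i: "i < n" using Q D by auto
    have "(L * Q) $$ (j, i) = (\<Sum>l<n. Lm E j l * q i l)"
      unfolding mult_entry[OF L Q j i] using i j by (intro sum.cong refl) (simp add: L_def lap_entry Q_def)
    also have "\<dots> = mv n (Lm E) (q i) j" unfolding mv_def using j by simp
    also have "\<dots> = \<mu> i * q i j" using qs i by simp
    also have "\<dots> = (\<Sum>l<n. q l j * (if l = i then \<mu> i else 0))"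
      using i by (simp add: if_distrib cong: if_cong)
    also have "\<dots> = (Q * D) $$ (j, i)"
      unfolding mult_entry[OF Q D j i] using i j by (intro sum.cong refl) (simp add: Q_def D_def)
    finally show "(L * Q) $$ (j, i) = (Q * D) $$ (j, i)" .
  qed (use L Q D in auto)
  have "L = L * (Q * QT)" unfolding QQT using L by simp
  also have "\<dots> = (L * Q) * QT" using L Q QT by (simp add: assoc_mult_mat)
  also have "\<dots> = Q * D * QT" unfolding LQ ..
  finally have "L = Q * D * QT" .
  hence "similar_mat L D" unfolding similar_mat_def
    using similar_mat_witI[OF QQT QTQ _ L D Q QT] by blast
  hence "char_poly L = char_poly D" by (rule char_poly_similar)
  also have "\<dots> = (\<Prod>a\<leftarrow>diag_mat D. [:- a, 1:])"
    by (rule char_poly_upper_triangular[OF D]) (auto simp: upper_triangular_def D_def)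
  also have "diag_mat D = map \<mu> [0..<n]" unfolding diag_mat_def D_def by simp
  finally have "proots (char_poly L) = mset (map \<mu> [0..<n])" using proots_lin_prod[of "map \<mu> [0..<n]"] by (simp only:)
  thus ?thesis unfolding sorted_eigenvalues_def L_def by (simp only: sorted_list_of_multiset_mset)
qed

lemma sort_second:
  fixes \<mu> :: "nat \<Rightarrow> real"
  assumes n2: "2 \<le> n" and m0: "\<mu> 0 = 0" and pos: "\<forall>i. 1 \<le> i \<and> i < n \<longrightarrow> 0 < \<mu> i"
  shows "sort (map \<mu> [0..<n]) ! 1 \<in> \<mu> ` {1..<n} \<and> (\<forall>i. 1 \<le> i \<and> i < n \<longrightarrow> sort (map \<mu> [0..<n]) ! 1 \<le> \<mu> i)"
proof -
  define ys where "ys = map \<mu> [1..<n]"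
  have split: "map \<mu> [0..<n] = 0 # ys" using n2 m0 unfolding ys_def by (simp add: upt_conv_Cons)
  have "[1..<n] \<noteq> []" using n2 by simp
  hence "ys \<noteq> []" unfolding ys_def by simp
  hence "length (sort ys) > 0" by simp
  then obtain y rest where yr: "sort ys = y # rest" by (cases "sort ys") auto
  have yin: "y \<in> set ys" proof -
    have "y \<in> set (sort ys)" using yr by simp
    thus ?thesis by simp
  qed
  hence "y \<in> \<mu> ` {1..<n}" unfolding ys_def by auto
  hence ypos: "y > 0" using pos by auto
  have "sort (0 # ys) = insort 0 (sort ys)" by simp
  also have "\<dots> = 0 # y # rest" using yr ypos by simp
  finally have s1: "sort (map \<mu> [0..<n]) ! 1 = y" unfolding split by simp
  have "sorted (y # rest)" using yr sorted_sort[of ys] by simp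
  hence yle: "\<forall>z\<in>set rest. y \<le> z" by simp
  have "y \<le> \<mu> i" if "1 \<le> i" "i < n" for i
  proof -
    have "\<mu> i \<in> set ys" using that unfolding ys_def by auto
    hence "\<mu> i \<in> set (sort ys)" by simp
    hence "\<mu> i \<in> set (y # rest)" using yr by simp
    thus ?thesis using yle by auto
  qed
  thus ?thesis using s1 \<open>y \<in> \<mu> ` {1..<n}\<close> by auto
qed

lemma eigen_data:
  assumes g: "graph_on n E" and conn: "connected_graph n E" and n2: "2 \<le> n"
  shows "\<exists>q \<mu>. ortho n q n \<and> (\<forall>i<n. supp n (q i) \<and> mv n (Lm E) (q i) = (\<lambda>j. \<mu> i * q i j))
      \<and> (\<forall>j<n. q 0 j = 1 / sqrt (real n))
      \<and> (\<forall>i. 1 \<le> i \<and> i < n \<longrightarrow> lambda2 n E \<le> \<mu> i \<and> \<mu> i \<le> 2 * real (card E))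
      \<and> 0 < lambda2 n E \<and> lambda2 n E \<le> 2 * real (card E)"
proof -
  have npos: "real n > 0" using n2 by simp
  define q0 where "q0 = (\<lambda>j. if j < n then 1 / sqrt (real n) else 0)"
  have q0s: "supp n q0" unfolding q0_def supp_def by simp
  have q0n: "ip n q0 q0 = 1"
  proof -
    have "ip n q0 q0 = (\<Sum>j<n. 1 / real n)"
      unfolding ip_def q0_def using npos by (intro sum.cong refl) (simp add: real_sqrt_mult[symmetric])
    thus ?thesis using npos by simp
  qed
  have rowsum: "(\<Sum>j<n. Lm E i j) = 0" if i: "i < n" for i
  proof -
    have "(\<Sum>j<n. Lm E i j) = (\<Sum>j<n. (if i = j then real (degree E i) else 0)) - (\<Sum>j<n. adjm E i j)"
      unfolding Lm_def by (rule sum_subtractf)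
    also have "(\<Sum>j<n. (if i = j then real (degree E i) else 0)) = real (degree E i)" using i by simp
    finally show ?thesis using degree_sum[OF g i] by simp
  qed
  have q0e: "mv n (Lm E) q0 = (\<lambda>j. 0 * q0 j)"
  proof (intro ext)
    fix i show "mv n (Lm E) q0 i = 0 * q0 i"
    proof (cases "i < n")
      case True
      have "(\<Sum>j<n. Lm E i j * q0 j) = (\<Sum>j<n. Lm E i j) * (1 / sqrt (real n))"
        unfolding q0_def sum_distrib_right by (intro sum.cong refl) simp
      thus ?thesis unfolding mv_def using True rowsum[OF True] by simp
    qed (simp add: mv_def)
  qed
  obtain q \<mu> where q: "q 0 = q0" "\<mu> 0 = 0" "ortho n q n"
    and qs: "\<forall>i<n. supp n (q i) \<and> mv n (Lm E) (q i) = (\<lambda>j. \<mu> i * q i j)"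
    using spectral_basis[OF symm_Lm q0s q0n q0e] by blast
  have unit: "ip n (q i) (q i) = 1" if "i < n" for i using q(3) that unfolding ortho_def by simp
  have muqf: "\<mu> i = qf n (Lm E) (q i)" if i: "i < n" for i
    unfolding qf_def using qs i unit[OF i] by (simp add: ip_scale_right)
  have mu_le: "\<mu> i \<le> 2 * real (card E)" if i: "i < n" for i
    using qf_Lm_le[OF g, of "q i"] unit[OF i] muqf[OF i] by simp
  have mu_pos: "0 < \<mu> i" if i: "1 \<le> i" "i < n" for i
  proof (rule ccontr)
    assume "\<not> 0 < \<mu> i"
    hence "\<mu> i = 0" using qf_Lm_nonneg[OF g, of "q i"] muqf[OF i(2)] by simp
    hence z: "qf n (Lm E) (q i) = 0" using muqf[OF i(2)] by simp
    have const: "q i j = q i 0" if "j < n" for j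
      using qf_Lm_zero_const[OF g conn z that] n2 by simp
    have "ip n (q 0) (q i) = 0" using q(3) i unfolding ortho_def by simp
    moreover have "ip n (q 0) (q i) = (\<Sum>j<n. (1 / sqrt (real n)) * q i 0)"
      unfolding ip_def q(1)
    proof (intro sum.cong refl)
      fix j assume "j \<in> {..<n}"
      hence "j < n" by simp
      thus "q0 j * q i j = 1 / sqrt (real n) * q i 0" unfolding q0_def using const[of j] by simp
    qed
    ultimately have "real n * ((1 / sqrt (real n)) * q i 0) = 0" by simp
    hence "q i 0 = 0" using npos by simp
    hence "ip n (q i) (q i) = (\<Sum>j<n. 0)"
      unfolding ip_def
    proof (intro sum.cong refl)
      fix j assume "j \<in> {..<n}"
      hence "j < n" by simp
      thus "q i j * q i j = 0" using const[of j] \<open>q i 0 = 0\<close> by simp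
    qed
    hence "ip n (q i) (q i) = 0" by simp
    thus False using unit[OF i(2)] by simp
  qed
  have l2: "lambda2 n E = sort (map \<mu> [0..<n]) ! 1"
    unfolding lambda2_def using char_poly_eigen[OF q(3) qs] by simp
  have ss: "sort (map \<mu> [0..<n]) ! 1 \<in> \<mu> ` {1..<n} \<and> (\<forall>i. 1 \<le> i \<and> i < n \<longrightarrow> sort (map \<mu> [0..<n]) ! 1 \<le> \<mu> i)"
    by (rule sort_second[of n \<mu>, OF n2 q(2)]) (use mu_pos in auto)
  then obtain i0 where i0: "1 \<le> i0" "i0 < n" "lambda2 n E = \<mu> i0" using l2 by auto
  have A: "\<forall>j<n. q 0 j = 1 / sqrt (real n)" unfolding q(1) q0_def by simp
  have B: "\<forall>i. 1 \<le> i \<and> i < n \<longrightarrow> lambda2 n E \<le> \<mu> i \<and> \<mu> i \<le> 2 * real (card E)"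
    using ss l2 mu_le by simp
  have C: "0 < lambda2 n E" using i0 mu_pos by simp
  have D: "lambda2 n E \<le> 2 * real (card E)" using i0 mu_le by simp
  show ?thesis
    by (rule exI[of _ q], rule exI[of _ \<mu>]) (use q(3) qs A B C D in auto)
qed

lemma geo_sum: "(\<Sum>d\<in>{1..D}. \<rho>^d) * (1 - \<rho>) = \<rho> - \<rho>^(Suc D)" for \<rho> :: real
proof (induction D)
  case 0 thus ?case by simp
next
  case (Suc D)
  have "{1..Suc D} = insert (Suc D) {1..D}" by auto
  hence "(\<Sum>d\<in>{1..Suc D}. \<rho>^d) = \<rho>^(Suc D) + (\<Sum>d\<in>{1..D}. \<rho>^d)" by simp
  hence "(\<Sum>d\<in>{1..Suc D}. \<rho>^d) * (1 - \<rho>) = \<rho>^(Suc D) * (1 - \<rho>) + (\<Sum>d\<in>{1..D}. \<rho>^d) * (1 - \<rho>)"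
    by (simp only: distrib_right)
  also have "\<dots> = \<rho>^(Suc D) * (1 - \<rho>) + (\<rho> - \<rho>^(Suc D))" using Suc.IH by (simp only:)
  also have "\<dots> = \<rho> - \<rho>^(Suc (Suc D))" by (simp add: algebra_simps)
  finally show ?case .
qed

lemma pbound:
  fixes c \<rho> :: real
  assumes c: "0 < c" "c \<le> 2" and r: "-1 \<le> \<rho>" "\<rho> \<le> 1 - c"
  shows "\<bar>1 + 2 * (\<Sum>d\<in>{1..D}. \<rho>^d)\<bar> \<le> 3 / c"
proof -
  define S where "S = (\<Sum>d\<in>{1..D}. \<rho>^d)"
  have geo: "S * (1 - \<rho>) = \<rho> - \<rho>^(Suc D)" unfolding S_def by (rule geo_sum)
  have omr: "1 - \<rho> \<ge> c" using r by simp
  show ?thesis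
  proof (cases "\<rho> \<ge> 0")
    case True
    have S0: "S \<ge> 0" unfolding S_def using True by (intro sum_nonneg) simp
    have "\<rho>^(Suc D) \<ge> 0" using True by simp
    hence "S * (1 - \<rho>) \<le> 1 - c" using geo r by simp
    moreover have "S * c \<le> S * (1 - \<rho>)" using S0 omr by (intro mult_left_mono) auto
    ultimately have "S * c \<le> 1 - c" by simp
    hence "S \<le> (1 - c) / c" using c by (simp add: le_divide_eq)
    hence "2 * S \<le> 2 * ((1 - c) / c)" by (rule mult_left_mono) simp
    hence "1 + 2 * S \<le> 1 + 2 * ((1 - c) / c)" by linarith
    also have "\<dots> = (2 - c) / c" using c by (simp add: field_simps)
    also have "\<dots> \<le> 3 / c" using c by (intro divide_right_mono) auto
    finally show ?thesis using S0 unfolding S_def[symmetric] by simp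
  next
    case False
    have ar: "\<bar>\<rho>\<bar> \<le> 1" using r False by simp
    have "\<bar>\<rho>^(Suc D)\<bar> = \<bar>\<rho>\<bar> * \<bar>\<rho>\<bar>^D" by (simp add: abs_mult power_abs)
    also have "\<dots> \<le> \<bar>\<rho>\<bar> * 1" using ar by (intro mult_left_mono power_le_one) auto
    finally have pw: "\<bar>\<rho>^(Suc D)\<bar> \<le> \<bar>\<rho>\<bar>" by simp
    have pos: "1 - \<rho> > 0" using False by simp
    have "S * (1 - \<rho>) \<le> 0" using geo pw False by (simp add: abs_le_iff)
    hence Sle: "S \<le> 0" using pos by (simp add: mult_le_0_iff)
    have "\<rho>^(Suc D) \<le> \<bar>\<rho>^(Suc D)\<bar>" by (rule abs_ge_self)
    hence "\<rho>^(Suc D) \<le> 1" using pw ar by linarith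
    hence "S * (1 - \<rho>) \<ge> - 1 * (1 - \<rho>)" using geo by simp
    hence Sge: "S \<ge> -1" using mult_right_le_imp_le pos by blast
    have "\<bar>1 + 2 * S\<bar> \<le> 1" using Sle Sge by simp
    also have "1 \<le> 3 / c" using c by (simp add: le_divide_eq)
    finally show ?thesis unfolding S_def .
  qed
qed

definition Pop :: "nat set set \<Rightarrow> (nat \<Rightarrow> real) \<Rightarrow> nat \<Rightarrow> real" where
  "Pop E \<phi> j = (\<Sum>e\<in>E. \<phi> (sw e j)) / real (card E)"

lemma Pop_cong: assumes "graph_on n E" "\<forall>l<n. \<phi> l = \<psi> l" "j < n"
  shows "Pop E \<phi> j = Pop E \<psi> j"
  unfolding Pop_def using sw_lt[OF assms(1) _ assms(3)] assms(2) by (simp cong: sum.cong)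

lemma Pop_L: assumes g: "graph_on n E" and ne: "E \<noteq> {}" and j: "j < n"
  shows "Pop E \<phi> j = \<phi> j - mv n (Lm E) \<phi> j / real (card E)"
proof -
  have fin: "finite E" by (rule finite_E[OF g])
  have m: "real (card E) > 0" using fin ne by (simp add: card_gt_0_iff)
  have "(\<Sum>e\<in>E. \<phi> (sw e j)) = (\<Sum>e\<in>E \<inter> {e. j \<in> e}. \<phi> (sw e j)) + (\<Sum>e\<in>E - {e. j \<in> e}. \<phi> (sw e j))"
    by (rule sum.Int_Diff[OF fin])
  also have "(\<Sum>e\<in>E - {e. j \<in> e}. \<phi> (sw e j)) = (\<Sum>e\<in>E - {e. j \<in> e}. \<phi> j)"
    by (intro sum.cong refl) (simp add: sw_out)
  also have "\<dots> = real (card (E - {e. j \<in> e})) * \<phi> j" by simp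
  also have "card (E - {e. j \<in> e}) = card E - degree E j"
  proof -
    have "card (E - {e. j \<in> e}) = card E - card (E \<inter> {e. j \<in> e})"
      using fin by (metis card_Diff_subset_Int finite_Int)
    moreover have "E \<inter> {e. j \<in> e} = {e \<in> E. j \<in> e}" by auto
    ultimately show ?thesis unfolding degree_def by simp
  qed
  also have "(\<Sum>e\<in>E \<inter> {e. j \<in> e}. \<phi> (sw e j)) = (\<Sum>l\<in>{l. l < n \<and> {j, l} \<in> E}. \<phi> (sw {j, l} j))"
  proof -
    have "E \<inter> {e. j \<in> e} = {e \<in> E. j \<in> e}" by auto
    thus ?thesis using sum.reindex_bij_betw[OF nbr_bij[OF g j], of "\<lambda>e. \<phi> (sw e j)"] by simp
  qed
  also have "\<dots> = (\<Sum>l\<in>{l. l < n \<and> {j, l} \<in> E}. \<phi> l)"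
    by (intro sum.cong refl) (use adj_lt[OF g] sw_pair in auto)
  also have "\<dots> = (\<Sum>l<n. adjm E j l * \<phi> l)"
  proof -
    have "{l. l < n \<and> {j, l} \<in> E} = {l \<in> {..<n}. {j, l} \<in> E}" by auto
    moreover have "(\<Sum>l<n. adjm E j l * \<phi> l) = (\<Sum>l<n. if {j, l} \<in> E then \<phi> l else 0)"
      by (intro sum.cong) (auto simp: adjm_def)
    ultimately show ?thesis using sum.inter_filter[of "{..<n}" \<phi> "\<lambda>l. {j, l} \<in> E"] by simp
  qed
  finally have A: "(\<Sum>e\<in>E. \<phi> (sw e j)) = (\<Sum>l<n. adjm E j l * \<phi> l) + real (card E - degree E j) * \<phi> j" .
  have dle: "degree E j \<le> card E" by (rule degree_le[OF g])
  have B: "mv n (Lm E) \<phi> j = real (degree E j) * \<phi> j - (\<Sum>l<n. adjm E j l * \<phi> l)"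
  proof -
    have "mv n (Lm E) \<phi> j = (\<Sum>l<n. Lm E j l * \<phi> l)" unfolding mv_def using j by simp
    also have "\<dots> = (\<Sum>l<n. (if j = l then real (degree E j) * \<phi> l else 0) - adjm E j l * \<phi> l)"
      unfolding Lm_def by (intro sum.cong refl) (auto simp: algebra_simps)
    also have "\<dots> = (\<Sum>l<n. (if j = l then real (degree E j) * \<phi> l else 0)) - (\<Sum>l<n. adjm E j l * \<phi> l)"
      by (rule sum_subtractf)
    also have "(\<Sum>l<n. (if j = l then real (degree E j) * \<phi> l else 0)) = real (degree E j) * \<phi> j"
      using j by simp
    finally show ?thesis .
  qed
  show ?thesis unfolding Pop_def A B using m dle by (simp add: field_simps of_nat_diff)
qed

lemma mv_sum: "mv n M (\<lambda>l. \<Sum>i\<in>I. c i * y i l) j = (\<Sum>i\<in>I. c i * mv n M (y i) j)"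
proof (cases "j < n")
  case True
  have "(\<Sum>l<n. M j l * (\<Sum>i\<in>I. c i * y i l)) = (\<Sum>l<n. \<Sum>i\<in>I. c i * (M j l * y i l))"
    by (simp add: sum_distrib_left algebra_simps)
  also have "\<dots> = (\<Sum>i\<in>I. \<Sum>l<n. c i * (M j l * y i l))" by (rule sum.swap)
  also have "\<dots> = (\<Sum>i\<in>I. c i * (\<Sum>l<n. M j l * y i l))" by (simp add: sum_distrib_left)
  finally show ?thesis unfolding mv_def using True by simp
qed (simp add: mv_def)

lemma Pop_pow_expand:
  assumes g: "graph_on n E" and ne: "E \<noteq> {}"
    and qs: "\<forall>i<n. supp n (q i) \<and> mv n (Lm E) (q i) = (\<lambda>j. \<mu> i * q i j)"
    and phi: "\<forall>j<n. \<phi> j = (\<Sum>i<n. a i * q i j)"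
  shows "\<forall>j<n. (Pop E ^^ d) \<phi> j = (\<Sum>i<n. a i * (1 - \<mu> i / real (card E))^d * q i j)"
proof (induction d)
  case 0 thus ?case using phi by simp
next
  case (Suc d)
  show ?case
  proof (intro allI impI)
    fix j assume j: "j < n"
    define \<psi> where "\<psi> = (\<lambda>l. \<Sum>i<n. (a i * (1 - \<mu> i / real (card E))^d) * q i l)"
    have "(Pop E ^^ Suc d) \<phi> j = Pop E ((Pop E ^^ d) \<phi>) j" by simp
    also have "\<dots> = Pop E \<psi> j"
      by (rule Pop_cong[OF g _ j]) (use Suc.IH in \<open>simp add: \<psi>_def\<close>)
    also have "\<dots> = \<psi> j - mv n (Lm E) \<psi> j / real (card E)" by (rule Pop_L[OF g ne j])
    also have "mv n (Lm E) \<psi> j = (\<Sum>i<n. (a i * (1 - \<mu> i / real (card E))^d) * (\<mu> i * q i j))"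
      unfolding \<psi>_def mv_sum using qs by simp
    also have "\<psi> j - \<dots> / real (card E) = (\<Sum>i<n. a i * (1 - \<mu> i / real (card E))^Suc d * q i j)"
      unfolding \<psi>_def by (simp add: sum_divide_distrib sum_subtractf[symmetric] algebra_simps diff_divide_distrib)
    finally show "(Pop E ^^ Suc d) \<phi> j = (\<Sum>i<n. a i * (1 - \<mu> i / real (card E))^Suc d * q i j)" .
  qed
qed

lemma ip_cong: "(\<forall>j<n. x j = x' j) \<Longrightarrow> ip n x y = ip n x' y"
  unfolding ip_def by (intro sum.cong refl) auto

lemma ip_combo: assumes "ortho n q n"
  shows "ip n (\<lambda>j. \<Sum>i<n. b i * q i j) (\<lambda>j. \<Sum>i<n. b' i * q i j) = (\<Sum>i<n. b i * b' i)"
proof -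
  have inner: "ip n (q i) (\<lambda>j. \<Sum>i<n. b' i * q i j) = b' i" if i: "i < n" for i
  proof -
    have "ip n (q i) (\<lambda>j. \<Sum>i<n. b' i * q i j) = ip n (\<lambda>j. \<Sum>i<n. b' i * q i j) (q i)" by (rule ip_comm)
    also have "\<dots> = (\<Sum>i'<n. b' i' * ip n (q i') (q i))" by (rule ip_sum_left)
    also have "\<dots> = (\<Sum>i'<n. if i' = i then b' i else 0)"
      using assms i unfolding ortho_def by (intro sum.cong refl) auto
    also have "\<dots> = b' i" using i by simp
    finally show ?thesis .
  qed
  have "ip n (\<lambda>j. \<Sum>i<n. b i * q i j) (\<lambda>j. \<Sum>i<n. b' i * q i j) = (\<Sum>i<n. b i * ip n (q i) (\<lambda>j. \<Sum>i<n. b' i * q i j))"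
    by (rule ip_sum_left)
  also have "\<dots> = (\<Sum>i<n. b i * b' i)" using inner by simp
  finally show ?thesis .
qed

lemma E_nonempty: assumes "connected_graph n E" "2 \<le> n" shows "E \<noteq> {}"
proof
  assume "E = {}"
  hence "adj_rel E = {}" unfolding adj_rel_def by auto
  moreover have "(0, 1) \<in> (adj_rel E)\<^sup>*" using assms unfolding connected_graph_def by auto
  ultimately show False by simp
qed

lemma core_bound:
  assumes g: "graph_on n E" and conn: "connected_graph n E" and n2: "2 \<le> n" and k: "k < n"
    and hs: "(\<Sum>j<n. h j) = 0"
  shows "h k * (h k + 2 * (\<Sum>d\<in>{1..D}. (Pop E ^^ d) h k)) \<le> 3 / (lambda2 n E / real (card E)) * ip n h h"
proof -
  obtain q \<mu> where orth: "ortho n q n"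
    and qs: "\<forall>i<n. supp n (q i) \<and> mv n (Lm E) (q i) = (\<lambda>j. \<mu> i * q i j)"
    and q0: "\<forall>j<n. q 0 j = 1 / sqrt (real n)"
    and mub: "\<forall>i. 1 \<le> i \<and> i < n \<longrightarrow> lambda2 n E \<le> \<mu> i \<and> \<mu> i \<le> 2 * real (card E)"
    and l2: "0 < lambda2 n E" "lambda2 n E \<le> 2 * real (card E)"
    using eigen_data[OF g conn n2] by blast
  have ne: "E \<noteq> {}" by (rule E_nonempty[OF conn n2])
  define m where "m = real (card E)"
  have m: "m > 0" unfolding m_def using ne finite_E[OF g] by (simp add: card_gt_0_iff)
  define c where "c = lambda2 n E / m"
  have c: "0 < c" "c \<le> 2" unfolding c_def using l2 m by (auto simp: divide_le_eq m_def)
  define \<rho> where "\<rho> i = 1 - \<mu> i / m" for i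
  define a where "a i = ip n (q i) h" for i
  have suppq: "\<forall>i<n. supp n (q i)" using qs by blast
  have hexp: "\<forall>j<n. h j = (\<Sum>i<n. a i * q i j)"
    unfolding a_def using parseval_expand[OF orth suppq] by blast
  have a0: "a 0 = 0"
  proof -
    have "a 0 = (\<Sum>j<n. (1 / sqrt (real n)) * h j)"
      unfolding a_def ip_def using q0 by (intro sum.cong refl) auto
    also have "\<dots> = (1 / sqrt (real n)) * (\<Sum>j<n. h j)" by (simp add: sum_distrib_left)
    finally show ?thesis using hs by simp
  qed
  have powexp: "(Pop E ^^ d) h j = (\<Sum>i<n. a i * \<rho> i ^ d * q i j)" if "j < n" for d j
    using Pop_pow_expand[OF g ne qs hexp, of d] that unfolding \<rho>_def m_def by blast
  define p where "p i = 1 + 2 * (\<Sum>d\<in>{1..D}. \<rho> i ^ d)" for i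
  define G where "G = (\<lambda>j. \<Sum>i<n. (a i * p i) * q i j)"
  have Gk: "h k + 2 * (\<Sum>d\<in>{1..D}. (Pop E ^^ d) h k) = G k"
  proof -
    have "(\<Sum>d\<in>{1..D}. (Pop E ^^ d) h k) = (\<Sum>d\<in>{1..D}. \<Sum>i<n. a i * \<rho> i ^ d * q i k)"
      using powexp[OF k] by simp
    also have "\<dots> = (\<Sum>i<n. \<Sum>d\<in>{1..D}. a i * \<rho> i ^ d * q i k)" by (rule sum.swap)
    also have "\<dots> = (\<Sum>i<n. a i * (\<Sum>d\<in>{1..D}. \<rho> i ^ d) * q i k)"
      by (simp add: sum_distrib_left sum_distrib_right algebra_simps)
    finally have "h k + 2 * (\<Sum>d\<in>{1..D}. (Pop E ^^ d) h k) = (\<Sum>i<n. a i * q i k) + 2 * (\<Sum>i<n. a i * (\<Sum>d\<in>{1..D}. \<rho> i ^ d) * q i k)"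
      using hexp k by simp
    also have "\<dots> = G k" unfolding G_def p_def
      by (simp add: sum_distrib_left sum.distrib algebra_simps)
    finally show ?thesis .
  qed
  define B where "B = 3 / c"
  have B: "B > 0" unfolding B_def using c by simp
  have termb: "(a i * p i)^2 \<le> B^2 * (a i)^2" if i: "i < n" for i
  proof (cases "i = 0")
    case True thus ?thesis using a0 by simp
  next
    case False
    hence "1 \<le> i" by simp
    hence mu: "lambda2 n E \<le> \<mu> i" "\<mu> i \<le> 2 * m" using mub i unfolding m_def by auto
    have r1: "-1 \<le> \<rho> i" unfolding \<rho>_def using mu m by (simp add: divide_le_eq)
    have r2: "\<rho> i \<le> 1 - c" unfolding \<rho>_def c_def using mu m by (simp add: divide_right_mono)
    have "\<bar>p i\<bar> \<le> B" unfolding p_def B_def by (rule pbound[OF c r1 r2])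
    hence "(p i)^2 \<le> B^2" using B by (metis abs_le_square_iff abs_of_pos)
    hence "(a i)^2 * (p i)^2 \<le> (a i)^2 * B^2" by (intro mult_left_mono) auto
    thus ?thesis by (simp add: power_mult_distrib mult.commute)
  qed
  have hh: "ip n h h = (\<Sum>i<n. a i * a i)"
  proof -
    have "ip n h h = ip n (\<lambda>j. \<Sum>i<n. a i * q i j) h" by (rule ip_cong) (use hexp in auto)
    also have "\<dots> = ip n (\<lambda>j. \<Sum>i<n. a i * q i j) (\<lambda>j. \<Sum>i<n. a i * q i j)"
      by (subst (1 2) ip_comm, rule ip_cong) (use hexp in auto)
    also have "\<dots> = (\<Sum>i<n. a i * a i)" by (rule ip_combo[OF orth])
    finally show ?thesis .
  qed
  have GG: "ip n G G \<le> B^2 * ip n h h"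
  proof -
    have "ip n G G = (\<Sum>i<n. (a i * p i) * (a i * p i))" unfolding G_def by (rule ip_combo[OF orth])
    also have "\<dots> \<le> (\<Sum>i<n. B^2 * (a i * a i))"
      using termb by (intro sum_mono) (simp add: power2_eq_square)
    also have "\<dots> = B^2 * ip n h h" unfolding hh by (simp add: sum_distrib_left)
    finally show ?thesis .
  qed
  have V: "ip n h h \<ge> 0" by (rule ip_self_nonneg)
  have "(h k * G k)^2 = (h k * h k) * (G k * G k)" by (simp add: power2_eq_square algebra_simps)
  also have "\<dots> \<le> ip n h h * (B^2 * ip n h h)"
  proof (rule mult_mono)
    show "h k * h k \<le> ip n h h" by (rule comp_sq_le[OF k])
    show "G k * G k \<le> B^2 * ip n h h" using comp_sq_le[OF k, of G] GG by linarith
  qed (use V in auto)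
  also have "\<dots> = (B * ip n h h)^2" by (simp add: power2_eq_square algebra_simps)
  finally have "(h k * G k)^2 \<le> (B * ip n h h)^2" .
  hence "\<bar>h k * G k\<bar> \<le> \<bar>B * ip n h h\<bar>" by (simp add: abs_le_square_iff)
  hence "h k * G k \<le> B * ip n h h" using B V by simp
  thus ?thesis unfolding Gk B_def c_def m_def .
qed

definition Ls :: "nat set set \<Rightarrow> nat \<Rightarrow> nat set list set" where
  "Ls E t = {es. length es = t \<and> set es \<subseteq> E}"

lemma Ls_finite: "finite E \<Longrightarrow> finite (Ls E t)"
  unfolding Ls_def using finite_lists_length_eq[of E t] by (simp add: conj_commute)

lemma Ls_card: "finite E \<Longrightarrow> card (Ls E t) = card E ^ t"
  unfolding Ls_def using card_lists_length_eq[of E t] by (simp add: conj_commute)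

lemma Ls_split_img: "Ls E (a + b) = (\<lambda>(x, y). x @ y) ` (Ls E a \<times> Ls E b)"
proof
  show "Ls E (a + b) \<subseteq> (\<lambda>(x, y). x @ y) ` (Ls E a \<times> Ls E b)"
  proof
    fix es assume es: "es \<in> Ls E (a + b)"
    have "es = (\<lambda>(x, y). x @ y) (take a es, drop a es)" by simp
    moreover have "(take a es, drop a es) \<in> Ls E a \<times> Ls E b"
      using es unfolding Ls_def by (auto dest: in_set_takeD in_set_dropD)
    ultimately show "es \<in> (\<lambda>(x, y). x @ y) ` (Ls E a \<times> Ls E b)" by blast
  qed
  show "(\<lambda>(x, y). x @ y) ` (Ls E a \<times> Ls E b) \<subseteq> Ls E (a + b)"
    unfolding Ls_def by auto
qed

lemma Ls_split_inj: "inj_on (\<lambda>(x, y). x @ y) (Ls E a \<times> Ls E b)"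
proof (rule inj_onI)
  fix p p' assume p: "p \<in> Ls E a \<times> Ls E b" and p': "p' \<in> Ls E a \<times> Ls E b"
    and eq: "(\<lambda>(x, y). x @ y) p = (\<lambda>(x, y). x @ y) p'"
  obtain x y where xy: "p = (x, y)" by (cases p)
  obtain x' y' where xy': "p' = (x', y')" by (cases p')
  have "length x = length x'" using p p' xy xy' unfolding Ls_def by simp
  moreover have "x @ y = x' @ y'" using eq xy xy' by simp
  ultimately have "x = x' \<and> y = y'" using append_eq_append_conv by blast
  thus "p = p'" using xy xy' by simp
qed

lemma Ls_split_sum: "(\<Sum>es\<in>Ls E (a + b). F es) = (\<Sum>x\<in>Ls E a. \<Sum>y\<in>Ls E b. F (x @ y))"
proof -
  have "(\<Sum>es\<in>Ls E (a + b). F es) = (\<Sum>p\<in>Ls E a \<times> Ls E b. F ((\<lambda>(x, y). x @ y) p))"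
    unfolding Ls_split_img by (rule sum.reindex[OF Ls_split_inj, unfolded comp_def])
  also have "\<dots> = (\<Sum>x\<in>Ls E a. \<Sum>y\<in>Ls E b. F (x @ y))"
    by (simp add: sum.cartesian_product split_def)
  finally show ?thesis .
qed

lemma Ls_take_sum: assumes "finite E" "d \<le> N"
  shows "(\<Sum>z\<in>Ls E N. F (take d z)) = real (card E) ^ (N - d) * (\<Sum>y\<in>Ls E d. F y)"
proof -
  have N: "N = d + (N - d)" using assms(2) by simp
  have "(\<Sum>z\<in>Ls E N. F (take d z)) = (\<Sum>z\<in>Ls E (d + (N - d)). F (take d z))" using N by simp
  also have "\<dots> = (\<Sum>y\<in>Ls E d. \<Sum>w\<in>Ls E (N - d). F (take d (y @ w)))" by (rule Ls_split_sum)
  also have "\<dots> = (\<Sum>y\<in>Ls E d. \<Sum>w\<in>Ls E (N - d). F y)"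
    by (intro sum.cong refl) (simp add: Ls_def)
  also have "\<dots> = (\<Sum>y\<in>Ls E d. real (card E) ^ (N - d) * F y)"
    using Ls_card[OF assms(1)] by simp
  finally show ?thesis by (simp add: sum_distrib_left)
qed

lemma Ls_Suc_img: "Ls E (Suc d) = (\<lambda>(e, y). e # y) ` (E \<times> Ls E d)"
proof
  show "Ls E (Suc d) \<subseteq> (\<lambda>(e, y). e # y) ` (E \<times> Ls E d)"
  proof
    fix es assume "es \<in> Ls E (Suc d)"
    then obtain e y where "es = e # y" "length y = d" "e \<in> E" "set y \<subseteq> E"
      unfolding Ls_def by (auto simp: length_Suc_conv)
    thus "es \<in> (\<lambda>(e, y). e # y) ` (E \<times> Ls E d)" unfolding Ls_def by force
  qed
qed (auto simp: Ls_def)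

lemma walk_sum: assumes "finite E"
  shows "(\<Sum>y\<in>Ls E d. \<phi> (compL y k)) = real (card E) ^ d * (Pop E ^^ d) \<phi> k"
  using assms
proof (induction d arbitrary: \<phi>)
  case 0
  have "Ls E 0 = {[]}" unfolding Ls_def by auto
  thus ?case by simp
next
  case (Suc d)
  have inj: "inj_on (\<lambda>(e, y). e # y) (E \<times> Ls E d)"
  proof (rule inj_onI)
    fix p p' assume eq: "(\<lambda>(e, y). e # y) p = (\<lambda>(e, y). e # y) p'" and "p \<in> E \<times> Ls E d" "p' \<in> E \<times> Ls E d"
    obtain x y where xy: "p = (x, y)" by (cases p)
    obtain x' y' where xy': "p' = (x', y')" by (cases p')
    show "p = p'" using eq xy xy' by simp
  qed
  have "(\<Sum>y\<in>Ls E (Suc d). \<phi> (compL y k)) = (\<Sum>p\<in>E \<times> Ls E d. \<phi> (compL ((\<lambda>(e, y). e # y) p) k))"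
    unfolding Ls_Suc_img by (rule sum.reindex[OF inj, unfolded comp_def])
  also have "\<dots> = (\<Sum>e\<in>E. \<Sum>y\<in>Ls E d. \<phi> (sw e (compL y k)))"
    by (simp add: sum.cartesian_product split_def)
  also have "\<dots> = (\<Sum>y\<in>Ls E d. \<Sum>e\<in>E. \<phi> (sw e (compL y k)))" by (rule sum.swap)
  also have "\<dots> = (\<Sum>y\<in>Ls E d. real (card E) * Pop E \<phi> (compL y k))"
  proof (intro sum.cong refl)
    fix y
    show "(\<Sum>e\<in>E. \<phi> (sw e (compL y k))) = real (card E) * Pop E \<phi> (compL y k)"
    proof (cases "card E = 0")
      case True
      hence "E = {}" using Suc.prems by simp
      thus ?thesis by simp
    qed (simp add: Pop_def)
  qed
  also have "\<dots> = real (card E) * (\<Sum>y\<in>Ls E d. Pop E \<phi> (compL y k))" by (simp add: sum_distrib_left)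
  also have "(\<Sum>y\<in>Ls E d. Pop E \<phi> (compL y k)) = real (card E) ^ d * (Pop E ^^ d) (Pop E \<phi>) k"
    by (rule Suc.IH[OF Suc.prems])
  also have "(Pop E ^^ d) (Pop E \<phi>) = (Pop E ^^ Suc d) \<phi>" by (simp only: funpow_Suc_right comp_def)
  finally show ?case by simp
qed

lemma avg_alg: "(N::real) \<noteq> 0 \<Longrightarrow> N * ((1 - 1 / N) * a + 1 / N * z) = (N - 1) * a + z"
  by (simp add: algebra_simps)

lemma R'_sum: "real t * gorank_R' X es k t = (\<Sum>s<t. if X k > gorank_Y X es s k then 1 else 0)"
proof (induction t)
  case 0 thus ?case by simp
next
  case (Suc t)
  have alg: "real (Suc t) * ((1 - 1 / real (Suc t)) * a + 1 / real (Suc t) * z) = real t * a + z" for a z :: real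
    using avg_alg[of "real (Suc t)" a z] by simp
  show ?case using Suc.IH by (simp only: gorank_R'.simps alg sum.lessThan_Suc)
qed

lemma sq_expand: "(\<Sum>s<t. w s)^2 = (\<Sum>s<t. w s * (w s + 2 * (\<Sum>d\<in>{1..t - Suc s}. w (s + d)))) " for w :: "nat \<Rightarrow> real"
proof (induction t)
  case 0 thus ?case by simp
next
  case (Suc t)
  have inner: "(\<Sum>d\<in>{1..Suc t - Suc s}. w (s + d)) = (\<Sum>d\<in>{1..t - Suc s}. w (s + d)) + w t" if s: "s < t" for s
  proof -
    have "Suc t - Suc s = Suc (t - Suc s)" using s by simp
    hence "{1..Suc t - Suc s} = insert (Suc (t - Suc s)) {1..t - Suc s}" by auto
    moreover have "s + Suc (t - Suc s) = t" using s by simp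
    ultimately show ?thesis by simp
  qed
  have "(\<Sum>s<Suc t. w s * (w s + 2 * (\<Sum>d\<in>{1..Suc t - Suc s}. w (s + d))))
      = (\<Sum>s<t. w s * (w s + 2 * (\<Sum>d\<in>{1..Suc t - Suc s}. w (s + d)))) + w t * w t"
    by simp
  also have "(\<Sum>s<t. w s * (w s + 2 * (\<Sum>d\<in>{1..Suc t - Suc s}. w (s + d))))
      = (\<Sum>s<t. w s * (w s + 2 * (\<Sum>d\<in>{1..t - Suc s}. w (s + d))) + 2 * w t * w s)"
    using inner by (intro sum.cong refl) (simp add: algebra_simps)
  also have "\<dots> = (\<Sum>s<t. w s)^2 + 2 * w t * (\<Sum>s<t. w s)"
    using Suc.IH by (simp add: sum.distrib sum_distrib_left)
  finally show ?case by (simp add: power2_eq_square algebra_simps)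
qed

lemma hx_props:
  assumes g: "graph_on n E" and n: "0 < n" and x: "set x \<subseteq> E"
    and u: "u = (\<Sum>i<n. f i) / real n" and f01: "\<forall>i. f i * f i = (f i :: real)"
  shows "(\<Sum>j<n. f (compL x j) - u) = 0" and "ip n (\<lambda>j. f (compL x j) - u) (\<lambda>j. f (compL x j) - u) = real n * u * (1 - u)"
proof -
  have bij: "bij_betw (compL x) {..<n} {..<n}" by (rule bij_compL[OF g x])
  have S: "(\<Sum>i<n. f i) = real n * u" using u n by simp
  have "(\<Sum>j<n. f (compL x j) - u) = (\<Sum>i<n. f i - u)"
    by (rule sum.reindex_bij_betw[OF bij, of "\<lambda>i. f i - u"])
  also have "\<dots> = 0" using S by (simp add: sum_subtractf)
  finally show "(\<Sum>j<n. f (compL x j) - u) = 0" .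
  have "ip n (\<lambda>j. f (compL x j) - u) (\<lambda>j. f (compL x j) - u) = (\<Sum>j<n. (\<lambda>i. (f i - u) * (f i - u)) (compL x j))"
    unfolding ip_def by simp
  also have "\<dots> = (\<Sum>i<n. (f i - u) * (f i - u))"
    by (rule sum.reindex_bij_betw[OF bij])
  also have "\<dots> = (\<Sum>i<n. f i - 2 * u * f i + u * u)"
    using f01 by (intro sum.cong refl) (simp add: algebra_simps)
  also have "\<dots> = (\<Sum>i<n. f i) - 2 * u * (\<Sum>i<n. f i) + real n * u * u"
    by (simp add: sum.distrib sum_subtractf sum_distrib_left)
  also have "\<dots> = real n * u * (1 - u)" unfolding S by (simp add: algebra_simps)
  finally show "ip n (\<lambda>j. f (compL x j) - u) (\<lambda>j. f (compL x j) - u) = real n * u * (1 - u)" .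
qed

lemma W_split:
  assumes x: "length x = s" and dz: "d \<le> length z"
  shows "gorank_Y X (x @ z) (s + d) k' = X (compL x (compL (take d z) k'))"
proof -
  have "s + d \<le> length (x @ z)" using x dz by simp
  hence "gorank_Y X (x @ z) (s + d) = X \<circ> compL (take (s + d) (x @ z))" by (rule gorank_Y_comp)
  also have "take (s + d) (x @ z) = x @ take d z" using x by simp
  finally show ?thesis by (simp add: compL_append)
qed

lemma per_x:
  fixes X :: "nat \<Rightarrow> real" and u :: real and k :: nat
  assumes fin: "finite E" and x: "length x = s" and st: "s < t"
  defines "hx \<equiv> \<lambda>j. (if X k > X (compL x j) then 1 else 0) - (u::real)"
  defines "Wf \<equiv> \<lambda>es s'. (if X k > gorank_Y X es s' k then 1 else 0) - u"
  shows "(\<Sum>z\<in>Ls E (t - s). Wf (x @ z) s * (Wf (x @ z) s + 2 * (\<Sum>d\<in>{1..t - Suc s}. Wf (x @ z) (s + d))))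
       = real (card E) ^ (t - s) * (hx k * (hx k + 2 * (\<Sum>d\<in>{1..t - Suc s}. (Pop E ^^ d) hx k)))"
proof -
  define m where "m = real (card E)"
  define D where "D = t - Suc s"
  have Wz: "Wf (x @ z) (s + d) = hx (compL (take d z) k)" if "z \<in> Ls E (t - s)" "d \<le> t - s" for z d
  proof -
    have "d \<le> length z" using that unfolding Ls_def by simp
    from W_split[OF x this, of X k] show ?thesis unfolding Wf_def hx_def by simp
  qed
  have W0: "Wf (x @ z) s = hx k" if "z \<in> Ls E (t - s)" for z
    using Wz[OF that, of 0] by simp
  have inner: "(\<Sum>z\<in>Ls E (t - s). hx (compL (take d z) k)) = m ^ (t - s) * (Pop E ^^ d) hx k"
    if d: "d \<le> t - s" for d
  proof -
    have "(\<Sum>z\<in>Ls E (t - s). hx (compL (take d z) k)) = m ^ (t - s - d) * (\<Sum>y\<in>Ls E d. hx (compL y k))"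
      unfolding m_def by (rule Ls_take_sum[OF fin d])
    also have "(\<Sum>y\<in>Ls E d. hx (compL y k)) = m ^ d * (Pop E ^^ d) hx k"
      unfolding m_def by (rule walk_sum[OF fin])
    also have "m ^ (t - s - d) * (m ^ d * (Pop E ^^ d) hx k) = m ^ (t - s - d + d) * (Pop E ^^ d) hx k"
      by (simp add: power_add)
    also have "t - s - d + d = t - s" using d by simp
    finally show ?thesis .
  qed
  have "(\<Sum>z\<in>Ls E (t - s). Wf (x @ z) s * (Wf (x @ z) s + 2 * (\<Sum>d\<in>{1..D}. Wf (x @ z) (s + d))))
      = (\<Sum>z\<in>Ls E (t - s). hx k * hx k + 2 * hx k * (\<Sum>d\<in>{1..D}. hx (compL (take d z) k)))"
  proof (intro sum.cong refl)
    fix z assume z: "z \<in> Ls E (t - s)"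
    have "(\<Sum>d\<in>{1..D}. Wf (x @ z) (s + d)) = (\<Sum>d\<in>{1..D}. hx (compL (take d z) k))"
      using Wz[OF z] unfolding D_def by (intro sum.cong refl) auto
    thus "Wf (x @ z) s * (Wf (x @ z) s + 2 * (\<Sum>d\<in>{1..D}. Wf (x @ z) (s + d))) = hx k * hx k + 2 * hx k * (\<Sum>d\<in>{1..D}. hx (compL (take d z) k))"
      using W0[OF z] by (simp add: algebra_simps)
  qed
  also have "\<dots> = real (card (Ls E (t - s))) * (hx k * hx k) + 2 * hx k * (\<Sum>z\<in>Ls E (t - s). \<Sum>d\<in>{1..D}. hx (compL (take d z) k))"
    by (simp add: sum.distrib sum_distrib_left)
  also have "(\<Sum>z\<in>Ls E (t - s). \<Sum>d\<in>{1..D}. hx (compL (take d z) k)) = (\<Sum>d\<in>{1..D}. \<Sum>z\<in>Ls E (t - s). hx (compL (take d z) k))"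
    by (rule sum.swap)
  also have "(\<Sum>d\<in>{1..D}. \<Sum>z\<in>Ls E (t - s). hx (compL (take d z) k)) = (\<Sum>d\<in>{1..D}. m ^ (t - s) * (Pop E ^^ d) hx k)"
    using inner unfolding D_def by (intro sum.cong refl) auto
  also have "real (card (Ls E (t - s))) = m ^ (t - s)" unfolding m_def using Ls_card[OF fin] by simp
  finally show ?thesis unfolding D_def[symmetric] m_def[symmetric]
    by (simp add: sum_distrib_left algebra_simps)
qed

lemma total_bound:
  fixes X :: "nat \<Rightarrow> real"
  assumes g: "graph_on n E" and conn: "connected_graph n E" and n2: "2 \<le> n" and k: "k < n"
  defines "f \<equiv> \<lambda>i. if X k > X i then 1 else (0::real)"
  defines "u \<equiv> (\<Sum>i<n. f i) / real n"
  defines "Wf \<equiv> \<lambda>es s'. (if X k > gorank_Y X es s' k then 1 else 0) - u"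
  shows "(\<Sum>es\<in>Ls E t. (\<Sum>s<t. Wf es s)^2) \<le> real t * real (card E)^t * (3 / (lambda2 n E / real (card E)) * (real n * u * (1 - u)))"
proof -
  have fin: "finite E" by (rule finite_E[OF g])
  define m where "m = real (card E)"
  define B where "B = 3 / (lambda2 n E / real (card E))"
  define V where "V = real n * u * (1 - u)"
  have n0: "0 < n" using n2 by simp
  have f01: "\<forall>i. f i * f i = f i" unfolding f_def by simp
  have per_s: "(\<Sum>es\<in>Ls E t. Wf es s * (Wf es s + 2 * (\<Sum>d\<in>{1..t - Suc s}. Wf es (s + d)))) \<le> m ^ t * (B * V)"
    if st: "s < t" for s
  proof -
    have tt: "t = s + (t - s)" using st by simp
    have "(\<Sum>es\<in>Ls E t. Wf es s * (Wf es s + 2 * (\<Sum>d\<in>{1..t - Suc s}. Wf es (s + d))))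
        = (\<Sum>es\<in>Ls E (s + (t - s)). Wf es s * (Wf es s + 2 * (\<Sum>d\<in>{1..t - Suc s}. Wf es (s + d))))"
      using tt by simp
    also have "\<dots> = (\<Sum>x\<in>Ls E s. \<Sum>z\<in>Ls E (t - s). Wf (x @ z) s * (Wf (x @ z) s + 2 * (\<Sum>d\<in>{1..t - Suc s}. Wf (x @ z) (s + d))))"
      by (rule Ls_split_sum)
    also have "\<dots> = (\<Sum>x\<in>Ls E s. m ^ (t - s) * ((\<lambda>j. f (compL x j) - u) k * ((\<lambda>j. f (compL x j) - u) k + 2 * (\<Sum>d\<in>{1..t - Suc s}. (Pop E ^^ d) (\<lambda>j. f (compL x j) - u) k))))"
    proof (intro sum.cong refl)
      fix x assume "x \<in> Ls E s"
      hence x: "length x = s" unfolding Ls_def by simp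
      show "(\<Sum>z\<in>Ls E (t - s). Wf (x @ z) s * (Wf (x @ z) s + 2 * (\<Sum>d\<in>{1..t - Suc s}. Wf (x @ z) (s + d))))
          = m ^ (t - s) * ((\<lambda>j. f (compL x j) - u) k * ((\<lambda>j. f (compL x j) - u) k + 2 * (\<Sum>d\<in>{1..t - Suc s}. (Pop E ^^ d) (\<lambda>j. f (compL x j) - u) k)))"
        using per_x[OF fin x st, of X k u] unfolding Wf_def f_def m_def by simp
    qed
    also have "\<dots> \<le> (\<Sum>x\<in>Ls E s. m ^ (t - s) * (B * V))"
    proof (intro sum_mono mult_left_mono)
      fix x assume "x \<in> Ls E s"
      hence x: "set x \<subseteq> E" unfolding Ls_def by simp
      note hp = hx_props[OF g n0 x meta_eq_to_obj_eq[OF u_def] f01]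
      show "(\<lambda>j. f (compL x j) - u) k * ((\<lambda>j. f (compL x j) - u) k + 2 * (\<Sum>d\<in>{1..t - Suc s}. (Pop E ^^ d) (\<lambda>j. f (compL x j) - u) k)) \<le> B * V"
        using core_bound[OF g conn n2 k hp(1), of "t - Suc s"] hp(2) unfolding B_def V_def by simp
      show "0 \<le> m ^ (t - s)" unfolding m_def by simp
    qed
    also have "\<dots> = m ^ s * m ^ (t - s) * (B * V)"
      using Ls_card[OF fin, of s] unfolding m_def by simp
    also have "m ^ s * m ^ (t - s) = m ^ t" using tt by (metis power_add)
    finally show ?thesis .
  qed
  have "(\<Sum>es\<in>Ls E t. (\<Sum>s<t. Wf es s)^2) = (\<Sum>es\<in>Ls E t. \<Sum>s<t. Wf es s * (Wf es s + 2 * (\<Sum>d\<in>{1..t - Suc s}. Wf es (s + d))))"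
    by (simp only: sq_expand)
  also have "\<dots> = (\<Sum>s<t. \<Sum>es\<in>Ls E t. Wf es s * (Wf es s + 2 * (\<Sum>d\<in>{1..t - Suc s}. Wf es (s + d))))"
    by (rule sum.swap)
  also have "\<dots> \<le> (\<Sum>s<t. m ^ t * (B * V))" by (intro sum_mono per_s) simp
  also have "\<dots> = real t * m ^ t * (B * V)" by simp
  finally show ?thesis unfolding m_def B_def V_def .
qed

theorem theorem2:
  fixes n :: nat and E :: "nat set set" and X :: "nat \<Rightarrow> real" and k t :: nat
  assumes "n \<ge> 2"
    and "graph_on n E"
    and "connected_graph n E"
    and "\<not> bipartite_graph n E"
    and "inj_on X {0..<n}"
    and "k < n"
    and "t \<ge> 1"
  defines "c \<equiv> lambda2 n E / real (card E)"
    and "u \<equiv> (rank n X k - 1) / real n"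
  defines "\<sigma> \<equiv> real n powr (3/2) * sqrt (u * (1 - u))"
  shows "measure_pmf.expectation (edge_seqs E t)
           (\<lambda>es. \<bar>gorank_R n X es k t - rank n X k\<bar>^2) \<le> 3 / (c * real t) * \<sigma>^2
       \<and> measure_pmf.expectation (edge_seqs E t)
           (\<lambda>es. \<bar>gorank_R n X es k t - rank n X k\<bar>) \<le> sqrt (3 / (c * real t)) * \<sigma>"
proof -
  note n2 = assms(1) and g = assms(2) and conn = assms(3) and k = assms(6) and t1 = assms(7)
  have fin: "finite E" by (rule finite_E[OF g])
  have ne: "E \<noteq> {}" by (rule E_nonempty[OF conn n2])
  define m where "m = real (card E)"
  have m: "m > 0" unfolding m_def using fin ne by (simp add: card_gt_0_iff)
  define S where "S = Ls E t"
  have es_def: "edge_seqs E t = pmf_of_set S" unfolding edge_seqs_def S_def Ls_def by simp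
  have finS: "finite S" unfolding S_def by (rule Ls_finite[OF fin])
  obtain e0 where e0: "e0 \<in> E" using ne by blast
  have neS: "S \<noteq> {}"
  proof -
    have "replicate t e0 \<in> S" unfolding S_def Ls_def using e0 by auto
    thus ?thesis by blast
  qed
  have cardS: "real (card S) = m ^ t" unfolding S_def m_def using Ls_card[OF fin] by simp
  have l2pos: "lambda2 n E > 0" using eigen_data[OF g conn n2] by blast
  define f where "f = (\<lambda>i. if X k > X i then 1 else (0::real))"
  have n0: "real n > 0" using n2 by simp
  have rk: "rank n X k = 1 + (\<Sum>i<n. f i)" unfolding rank_def f_def by simp
  have u': "u = (\<Sum>i<n. f i) / real n" unfolding u_def rk by simp
  have Sf: "(\<Sum>i<n. f i) = real n * u" unfolding u' using n0 by simp
  have u01: "0 \<le> u" "u \<le> 1"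
  proof -
    have "0 \<le> (\<Sum>i<n. f i)" unfolding f_def by (intro sum_nonneg) simp
    moreover have "(\<Sum>i<n. f i) \<le> (\<Sum>i<n. 1)" unfolding f_def by (intro sum_mono) simp
    ultimately show "0 \<le> u" "u \<le> 1" unfolding u' using n0 by (auto simp: divide_le_eq)
  qed
  define Wf where "Wf = (\<lambda>es s'. (if X k > gorank_Y X es s' k then 1 else 0) - u)"
  have tpos: "real t > 0" using t1 by simp
  have delta: "gorank_R n X es k t - rank n X k = (real n / real t) * (\<Sum>s<t. Wf es s)" for es
  proof -
    have R': "gorank_R' X es k t = (\<Sum>s<t. if X k > gorank_Y X es s k then 1 else 0) / real t"
      using R'_sum[of t X es k] tpos by (simp add: field_simps)
    have "(\<Sum>s<t. Wf es s) = (\<Sum>s<t. if X k > gorank_Y X es s k then 1 else 0) - real t * u"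
      unfolding Wf_def by (simp add: sum_subtractf)
    hence eqZ: "(\<Sum>s<t. if X k > gorank_Y X es s k then 1 else 0) = real t * u + (\<Sum>s<t. Wf es s)" by simp
    show ?thesis unfolding gorank_R_def R' rk Sf eqZ using tpos by (simp add: field_simps)
  qed
  define B where "B = 3 / (lambda2 n E / real (card E))"
  define V where "V = real n * u * (1 - u)"
  have tb: "(\<Sum>es\<in>S. (\<Sum>s<t. Wf es s)^2) \<le> real t * m ^ t * (B * V)"
    using total_bound[OF g conn n2 k, of X t] unfolding S_def m_def B_def V_def Wf_def u' f_def by simp
  have E1: "measure_pmf.expectation (edge_seqs E t) (\<lambda>es. \<bar>gorank_R n X es k t - rank n X k\<bar>^2)
      = (\<Sum>es\<in>S. \<bar>gorank_R n X es k t - rank n X k\<bar>^2) / m ^ t"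
    unfolding es_def using integral_pmf_of_set[OF neS finS] cardS by simp
  have "(\<Sum>es\<in>S. \<bar>gorank_R n X es k t - rank n X k\<bar>^2) = (real n / real t)^2 * (\<Sum>es\<in>S. (\<Sum>s<t. Wf es s)^2)"
    unfolding delta power2_abs power_mult_distrib by (rule sum_distrib_left[symmetric])
  also have "\<dots> \<le> (real n / real t)^2 * (real t * m ^ t * (B * V))"
    by (rule mult_left_mono[OF tb]) simp
  finally have sumb: "(\<Sum>es\<in>S. \<bar>gorank_R n X es k t - rank n X k\<bar>^2) \<le> (real n / real t)^2 * (real t * m ^ t * (B * V))" .
  have "(\<Sum>es\<in>S. \<bar>gorank_R n X es k t - rank n X k\<bar>^2) / m ^ t \<le> (real n / real t)^2 * (real t * m ^ t * (B * V)) / m ^ t"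
    by (rule divide_right_mono[OF sumb]) (use m in simp)
  also have "\<dots> = 3 / (c * real t) * (real n ^ 3 * (u * (1 - u)))"
    unfolding B_def V_def c_def using m tpos n0 l2pos by (simp add: field_simps power2_eq_square m_def power3_eq_cube)
  also have "real n ^ 3 * (u * (1 - u)) = \<sigma>^2"
  proof -
    have "(real n powr (3/2))^2 = real n powr (real 2 * (3/2))" using n0 by (simp add: powr_power)
    also have "\<dots> = real n ^ 3" using n0 by (simp add: powr_numeral)
    finally have p: "(real n powr (3/2))^2 = real n ^ 3" .
    have q: "(sqrt (u * (1 - u)))^2 = u * (1 - u)" using u01 by simp
    show ?thesis unfolding \<sigma>_def power_mult_distrib p q ..
  qed
  finally have goal1: "measure_pmf.expectation (edge_seqs E t) (\<lambda>es. \<bar>gorank_R n X es k t - rank n X k\<bar>^2) \<le> 3 / (c * real t) * \<sigma>^2"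
    unfolding E1 .
  have E2: "measure_pmf.expectation (edge_seqs E t) (\<lambda>es. \<bar>gorank_R n X es k t - rank n X k\<bar>)
      = (\<Sum>es\<in>S. \<bar>gorank_R n X es k t - rank n X k\<bar>) / real (card S)"
    unfolding es_def using integral_pmf_of_set[OF neS finS] by simp
  have cpos: "real (card S) > 0" using finS neS by (simp add: card_gt_0_iff)
  have "((\<Sum>es\<in>S. \<bar>gorank_R n X es k t - rank n X k\<bar>) / real (card S))^2
      = (\<Sum>es\<in>S. \<bar>gorank_R n X es k t - rank n X k\<bar>)^2 / (real (card S) * real (card S))"
    by (simp add: power_divide power2_eq_square)
  also have "\<dots> \<le> ((\<Sum>es\<in>S. \<bar>gorank_R n X es k t - rank n X k\<bar>^2) * real (card S)) / (real (card S) * real (card S))"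
    by (rule divide_right_mono[OF sum_squared_le_sum_of_squares]) simp
  also have "\<dots> = (\<Sum>es\<in>S. \<bar>gorank_R n X es k t - rank n X k\<bar>^2) / m ^ t"
    using cpos cardS by simp
  also have "\<dots> \<le> 3 / (c * real t) * \<sigma>^2" using goal1 unfolding E1 .
  also have "\<dots> = (sqrt (3 / (c * real t)) * \<sigma>)^2"
  proof -
    have "c > 0" unfolding c_def using l2pos m unfolding m_def by simp
    hence "3 / (c * real t) \<ge> 0" using tpos by simp
    thus ?thesis by (simp add: power_mult_distrib)
  qed
  finally have sq: "(measure_pmf.expectation (edge_seqs E t) (\<lambda>es. \<bar>gorank_R n X es k t - rank n X k\<bar>))^2 \<le> (sqrt (3 / (c * real t)) * \<sigma>)^2"
    unfolding E2 .
  have "\<sigma> \<ge> 0" unfolding \<sigma>_def using u01 by (intro mult_nonneg_nonneg) auto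
  moreover have "c > 0" unfolding c_def using l2pos m unfolding m_def by simp
  ultimately have "sqrt (3 / (c * real t)) * \<sigma> \<ge> 0" using tpos by (intro mult_nonneg_nonneg) auto
  from power2_le_imp_le[OF sq this] show ?thesis using goal1 by simp
qed

end
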